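(* Let $\Gamma=(V,E,w)$ be a directed network with walk matrix $W$, and let $a_1,\dots,a_k\in V$ and $b_1,\dots,b_k\in V$ be such that for all $i<i'$ and $j'<j$, every walk from $a_i$ to $b_j$ has a vertex in common with every walk from $a_{i'}$ to $b_{j'}$. Let $W_{A,B}=(W(a_i,b_j))_{i,j=1}^k$. Then, as formal power series, $$\det(W_{A,B})=\sum w(\pi_1)\cdots w(\pi_k),$$ where the sum runs over all families of walks $\pi_i$ from $a_i$ to $b_i$ ($i=1,\dots,k$) such that for every $1\le i<k$ the walk $\pi_{i+1}$ has no vertex in common with $\mathrm{LE}(\pi_i)$. In particular, if the edge weights are specialized to nonnegative reals (with all the series involved convergent), then the matrix $W_{A,B}$ is totally nonnegative.
   Context: A directed network $\Gamma=(V,E,w)$ is a directed graph with vertex set $V$ and edge set $E$ (loops and multiple edges allowed) together with a family of commuting formal variables $\{w(e)\}_{e\in E}$. A walk $\pi$ of length $m$ from $a$ to $b$ is a sequence $a=a_0\xrightarrow{e_1}a_1\xrightarrow{e_2}\cdots\xrightarrow{e_m}a_m=b$ with each $e_i$ an edge from $a_{i-1}$ to $a_i$; its weight is $w(\pi)=\prod_i w(e_i)$, the length-$0$ walk having weight $1$. It is assumed that between any two vertices there are at most countably many walks of each fixed length, so that $W(a,b)=\sum_{\pi:a\to b}w(\pi)$ (sum over all walks from $a$ to $b$) is a well-defined formal power series; $W=(W(a,b))_{a,b\in V}$ is the walk matrix. Loop erasure: if all vertices $a_0,\dots,a_m$ of $\pi$ are distinct, $\mathrm{LE}(\pi)=\pi$;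 otherwise take $a_i=a_j$ ($i<j$) with $j$ as small as possible, delete the segment $a_i\xrightarrow{e_{i+1}}\cdots\xrightarrow{e_j}a_j$ from $\pi$ to obtain $\pi'$, and set $\mathrm{LE}(\pi)=\mathrm{LE}(\pi')$. A matrix is totally nonnegative if all its minors are nonnegative. *)

theory Defs
  imports "HOL-Library.Multiset" "HOL-Analysis.Infinite_Sum"
    "Jordan_Normal_Form.Determinant" "Jordan_Normal_Form.DL_Submatrix"
begin

text \<open>A formal power series in the commuting variables w(e), e an edge, is a function
  from monomials (finite multisets of edges) to integer coefficients.  Multiplication
  is the Cauchy product.\<close>

datatype 'e mfps = MFPS (coeff: "'e multiset \<Rightarrow> int")

lemma mfps_eqI: "(\<And>m. coeff f m = coeff g m) \<Longrightarrow> f = g"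
  by (cases f; cases g) auto

lemma finite_submsets: "finite {x. x \<subseteq># (m::'a multiset)}"
proof -
  have "{x. x \<subseteq># m} \<subseteq> mset ` {xs. set xs \<subseteq> set_mset m \<and> length xs \<le> size m}"
  proof
    fix x assume "x \<in> {x. x \<subseteq># m}"
    hence x: "x \<subseteq># m" by simp
    obtain xs where xs: "mset xs = x" using ex_mset by blast
    have "set xs \<subseteq> set_mset m" using x xs set_mset_mono by fastforce
    moreover have "length xs \<le> size m" using x xs size_mset_mono by fastforce
    ultimately show "x \<in> mset ` {xs. set xs \<subseteq> set_mset m \<and> length xs \<le> size m}"
      using xs by blast
  qed
  moreover have "finite {xs. set xs \<subseteq> set_mset m \<and> length xs \<le> size m}"
    by (rule finite_lists_length_le) simp
  ultimately show ?thesis by (meson finite_surj)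
qed

instantiation mfps :: (type) comm_ring_1
begin
definition "0 = MFPS (\<lambda>_. 0)"
definition "1 = MFPS (\<lambda>m. if m = {#} then 1 else 0)"
definition "f + g = MFPS (\<lambda>m. coeff f m + coeff g m)"
definition "f - g = MFPS (\<lambda>m. coeff f m - coeff g m)"
definition "- f = MFPS (\<lambda>m. - coeff f m)"
definition "f * g = MFPS (\<lambda>m. \<Sum>x\<in>{x. x \<subseteq># m}. coeff f x * coeff g (m - x))"

lemma coeff_mult: "coeff (f * g) m = (\<Sum>x\<in>{x. x \<subseteq># m}. coeff f x * coeff g (m - x))"
  by (simp add: times_mfps_def)

lemma mult_comm_aux: "(f::'a mfps) * g = g * f"
proof (rule mfps_eqI)
  fix m
  show "coeff (f * g) m = coeff (g * f) m"
    unfolding coeff_mult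
    by (rule sum.reindex_bij_witness[where i="\<lambda>x. m - x" and j="\<lambda>x. m - x"])
       (auto simp: subset_mset.diff_diff_right mult.commute)
qed

lemma mult_assoc_aux: "((f::'a mfps) * g) * h = f * (g * h)"
proof (rule mfps_eqI)
  fix m
  have "coeff ((f * g) * h) m =
      (\<Sum>(z,x)\<in>(SIGMA z:{z. z \<subseteq># m}. {x. x \<subseteq># z}). coeff f x * coeff g (z - x) * coeff h (m - z))"
    unfolding coeff_mult sum_distrib_right
    by (subst sum.Sigma) (auto simp: finite_submsets)
  also have "\<dots> = (\<Sum>(x,y)\<in>(SIGMA x:{x. x \<subseteq># m}. {y. y \<subseteq># m - x}). coeff f x * (coeff g y * coeff h (m - x - y)))"
  proof (rule sum.reindex_bij_witness[where i="\<lambda>(x,y). (x + y, x)" and j="\<lambda>(z,x). (x, z - x)"])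
    fix p assume p: "p \<in> (SIGMA x:{x. x \<subseteq># m}. {y. y \<subseteq># m - x})"
    obtain x y where pe: "p = (x,y)" by (cases p)
    from p pe have xm: "x \<subseteq># m" and ym: "y \<subseteq># m - x" by auto
    have xym: "x + y \<subseteq># m" using xm ym by (simp add: add.commute subset_mset.le_diff_conv2)
    show "(case (case p of (x, y) \<Rightarrow> (x + y, x)) of (z, x) \<Rightarrow> (x, z - x)) = p"
      using pe by simp
    show "(case p of (x, y) \<Rightarrow> (x + y, x)) \<in> (SIGMA z:{z. z \<subseteq># m}. {x. x \<subseteq># z})"
      using pe xym by simp
  next
    fix p assume p: "p \<in> (SIGMA z:{z. z \<subseteq># m}. {x. x \<subseteq># z})"
    obtain z x where pe: "p = (z,x)" by (cases p)
    from p pe have zm: "z \<subseteq># m" and xz: "x \<subseteq># z" by auto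
    have "z - x \<subseteq># m - x" using zm xz using subset_eq_diff_conv by fastforce
    moreover have "x \<subseteq># m" using xz zm by (rule subset_mset.order_trans)
    ultimately show "(case p of (z, x) \<Rightarrow> (x, z - x)) \<in> (SIGMA x:{x. x \<subseteq># m}. {y. y \<subseteq># m - x})"
      using pe by simp
    show "(case (case p of (z, x) \<Rightarrow> (x, z - x)) of (x, y) \<Rightarrow> (x + y, x)) = p"
      using pe xz by (simp add: subset_mset.add_diff_inverse)
    show "(case (case p of (z, x) \<Rightarrow> (x, z - x)) of (x, y) \<Rightarrow> coeff f x * (coeff g y * coeff h (m - x - y))) =
         (case p of (z, x) \<Rightarrow> coeff f x * coeff g (z - x) * coeff h (m - z))"
      using pe xz by (simp add: diff_diff_add subset_mset.add_diff_inverse mult.assoc)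
  qed
  also have "\<dots> = coeff (f * (g * h)) m"
    unfolding coeff_mult sum_distrib_left
    by (subst sum.Sigma) (auto simp: finite_submsets)
  finally show "coeff ((f * g) * h) m = coeff (f * (g * h)) m" .
qed

instance
proof
  fix f g h :: "'a mfps"
  show "f * g * h = f * (g * h)" by (rule mult_assoc_aux)
  show "f * g = g * f" by (rule mult_comm_aux)
  show "1 * f = f"
  proof (rule mfps_eqI)
    fix m
    have "coeff (1 * f) m = (\<Sum>x\<in>{x. x \<subseteq># m}. if x = {#} then coeff f (m - x) else 0)"
      unfolding coeff_mult by (rule sum.cong) (auto simp: one_mfps_def)
    also have "\<dots> = coeff f m" by (simp add: sum.delta finite_submsets)
    finally show "coeff (1 * f) m = coeff f m" .
  qed
  show "(f + g) * h = f * h + g * h"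
    by (rule mfps_eqI) (simp add: coeff_mult plus_mfps_def distrib_right sum.distrib)
qed (auto intro!: mfps_eqI dest: fun_cong[where x="{#}"] simp: zero_mfps_def one_mfps_def plus_mfps_def minus_mfps_def
        uminus_mfps_def)
end

text \<open>The formal sum of the monomials @ X^(mu p)@, p ranging over a set S
  (each monomial occurs with coefficient the number of p with that monomial).\<close>

definition mono_sum :: "'p set \<Rightarrow> ('p \<Rightarrow> 'e multiset) \<Rightarrow> 'e mfps" where
  "mono_sum S \<mu> = MFPS (\<lambda>m. int (card {p \<in> S. \<mu> p = m}))"

text \<open>A directed network is given by source and target maps of the edges; the edge
  weights are the formal variables w(e).  A walk is a start vertex together with the list
  of its steps (edge, vertex reached).\<close>

type_synonym ('v, 'e) walk = "'v \<times> ('e \<times> 'v) list"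

fun steps_ok :: "('e \<Rightarrow> 'v) \<Rightarrow> ('e \<Rightarrow> 'v) \<Rightarrow> 'v \<Rightarrow> ('e \<times> 'v) list \<Rightarrow> bool" where
  "steps_ok src tgt v [] = True"
| "steps_ok src tgt v ((e, u) # st) = (src e = v \<and> tgt e = u \<and> steps_ok src tgt u st)"

definition walk_verts :: "('v, 'e) walk \<Rightarrow> 'v list" where
  "walk_verts p = fst p # map snd (snd p)"

definition is_walk :: "('e \<Rightarrow> 'v) \<Rightarrow> ('e \<Rightarrow> 'v) \<Rightarrow> 'v \<Rightarrow> 'v \<Rightarrow> ('v, 'e) walk \<Rightarrow> bool" where
  "is_walk src tgt x y p \<longleftrightarrow> fst p = x \<and> last (walk_verts p) = y \<and> steps_ok src tgt (fst p) (snd p)"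

definition wmon :: "('v, 'e) walk \<Rightarrow> 'e multiset" where
  "wmon p = mset (map fst (snd p))"

definition walk_series :: "('e \<Rightarrow> 'v) \<Rightarrow> ('e \<Rightarrow> 'v) \<Rightarrow> 'v \<Rightarrow> 'v \<Rightarrow> 'e mfps" where
  "walk_series src tgt x y = mono_sum {p. is_walk src tgt x y p} wmon"

function LE :: "('v, 'e) walk \<Rightarrow> ('v, 'e) walk" where
  "LE (a, st) =
    (if distinct (a # map snd st) then (a, st)
     else (let vs = a # map snd st;
               j = (LEAST j. \<exists>i<j. vs ! i = vs ! j);
               i = (LEAST i. i < j \<and> vs ! i = vs ! j)
           in LE (a, take i st @ drop j st)))"
  by pat_completeness auto
termination
proof (relation "measure (\<lambda>(a, st). length st)")
  show "wf (measure (\<lambda>(a, st). length st))" by simp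
next
  fix a :: 'v and st :: "('e \<times> 'v) list" and vs j i
  assume nd: "\<not> distinct (a # map snd st)" and vs: "vs = a # map snd st"
    and j: "j = (LEAST j. \<exists>i<j. vs ! i = vs ! j)" and i: "i = (LEAST i. i < j \<and> vs ! i = vs ! j)"
  from nd vs obtain i1 j1 where ij1: "i1 < length vs" "j1 < length vs" "i1 \<noteq> j1" "vs ! i1 = vs ! j1"
    by (auto simp only: distinct_conv_nth)
  define i0 where "i0 = min i1 j1"
  define j0 where "j0 = max i1 j1"
  have ij0: "i0 < j0" "j0 < length vs" "vs ! i0 = vs ! j0"
    using ij1 by (auto simp: i0_def j0_def min_def max_def)
  hence ex: "\<exists>i<j0. vs ! i = vs ! j0" by blast
  have "j \<le> j0" unfolding j by (rule Least_le) (rule ex)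
  have "\<exists>i<j. vs ! i = vs ! j" unfolding j by (rule LeastI) (rule ex)
  hence "i < j \<and> vs ! i = vs ! j" unfolding i by (metis (mono_tags, lifting) LeastI)
  with \<open>j \<le> j0\<close> ij0 vs show "((a, take i st @ drop j st), (a, st)) \<in> measure (\<lambda>(a, st). length st)"
    by auto
qed

definition walk_rweight :: "('e \<Rightarrow> real) \<Rightarrow> ('v, 'e) walk \<Rightarrow> real" where
  "walk_rweight r p = prod_list (map (r \<circ> fst) (snd p))"

definition totally_nonneg :: "real mat \<Rightarrow> bool" where
  "totally_nonneg M \<longleftrightarrow>
     (\<forall>I J. I \<subseteq> {..<dim_row M} \<longrightarrow> J \<subseteq> {..<dim_col M} \<longrightarrow> card I = card J \<longrightarrow>
        det (submatrix M I J) \<ge> 0)"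

end

theory Submission
  imports Defs
begin

fun lcut :: "'v \<Rightarrow> ('e \<times> 'v) list \<Rightarrow> ('e \<times> 'v) list" where
  "lcut u [] = []"
| "lcut u (x # xs) = (if snd x = u then [x] else x # lcut u xs)"

definition lestep :: "'v \<Rightarrow> ('e \<times> 'v) list \<Rightarrow> ('e \<times> 'v) \<Rightarrow> ('e \<times> 'v) list" where
  "lestep a cur x = (if snd x = a then [] else if snd x \<in> snd ` set cur then lcut (snd x) cur else cur @ [x])"

definition LEi :: "'v \<Rightarrow> ('e \<times> 'v) list \<Rightarrow> ('e \<times> 'v) list" where
  "LEi a st = foldl (lestep a) [] st"

lemma lcut_take: "\<exists>n. lcut u xs = take n xs"
proof (induction xs)
  case Nil then show ?case by auto
next
  case (Cons x xs)
  then obtain n where "lcut u xs = take n xs" by auto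
  then show ?case by (cases "snd x = u") (auto intro: exI[of _ "Suc 0"] exI[of _ "Suc n"])
qed

lemma lcut_take_nth:
  assumes "p < length xs" "map snd xs ! p = u" "u \<notin> set (take p (map snd xs))"
  shows "lcut u xs = take (Suc p) xs"
  using assms
proof (induction xs arbitrary: p)
  case Nil then show ?case by simp
next
  case (Cons x xs)
  show ?case
  proof (cases p)
    case 0 then show ?thesis using Cons by simp
  next
    case (Suc q)
    then have "snd x \<noteq> u" using Cons.prems by auto
    then show ?thesis using Cons.IH[of q] Cons.prems Suc by auto
  qed
qed

lemma lcut_last: "u \<in> snd ` set xs \<Longrightarrow> lcut u xs \<noteq> [] \<and> snd (last (lcut u xs)) = u"
  by (induction xs) auto

lemma distinct_foldl_id:
  "distinct (a # map snd (cur @ xs)) \<Longrightarrow> foldl (lestep a) cur xs = cur @ xs"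
proof (induction xs arbitrary: cur)
  case Nil then show ?case by simp
next
  case (Cons x xs)
  have "lestep a cur x = cur @ [x]"
    using Cons.prems by (auto simp: lestep_def)
  then show ?case using Cons.IH[of "cur @ [x]"] Cons.prems by simp
qed

lemma LE_eq: "LE (a, st) = (a, LEi a st)"
proof (induction "(a, st)" arbitrary: a st rule: LE.induct)
  case (1 a st)
  show ?case
  proof (cases "distinct (a # map snd st)")
    case True
    then show ?thesis using distinct_foldl_id[of a "[]" st] by (simp add: LEi_def)
  next
    case False
    define vs where "vs = a # map snd st"
    define j where "j = (LEAST j. \<exists>i<j. vs ! i = vs ! j)"
    define i where "i = (LEAST i. i < j \<and> vs ! i = vs ! j)"
    have IH: "LE (a, take i st @ drop j st) = (a, LEi a (take i st @ drop j st))"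
      using 1[OF False vs_def j_def i_def] .
    have LEs: "LE (a, st) = LE (a, take i st @ drop j st)"
      apply (subst LE.simps)
      apply (simp only: if_not_P[OF False] Let_def flip: vs_def)
      apply (simp only: flip: j_def)
      apply (simp only: flip: i_def)
      apply (simp only: if_not_P[OF False[folded vs_def]])
      done
    from False obtain i1 j1 where ij1: "i1 < length vs" "j1 < length vs" "i1 \<noteq> j1" "vs ! i1 = vs ! j1"
      by (auto simp only: distinct_conv_nth vs_def)
    define i0 where "i0 = min i1 j1"
    define j0 where "j0 = max i1 j1"
    have ij0: "i0 < j0" "j0 < length vs" "vs ! i0 = vs ! j0"
      using ij1 by (auto simp: i0_def j0_def min_def max_def)
    hence ex: "\<exists>i<j0. vs ! i = vs ! j0" by blast
    have jle: "j \<le> j0" unfolding j_def by (rule Least_le) (rule ex)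
    have "\<exists>i<j. vs ! i = vs ! j" unfolding j_def by (rule LeastI) (rule ex)
    hence ij: "i < j \<and> vs ! i = vs ! j" unfolding i_def by (metis (mono_tags, lifting) LeastI)
    have ilj: "i < j" using ij by blast
    have imin: "vs ! i' \<noteq> vs ! j" if "i' < i" for i'
    proof -
      have "\<not> (i' < j \<and> vs ! i' = vs ! j)" unfolding i_def by (rule not_less_Least) (use that in \<open>simp add: i_def\<close>)
      then show ?thesis using that ij by simp
    qed
    have jmin: "vs ! i' \<noteq> vs ! j'" if "i' < j'" "j' < j" for i' j'
    proof -
      have "\<not> (\<exists>i<j'. vs ! i = vs ! j')" unfolding j_def by (rule not_less_Least) (use that in \<open>simp add: j_def\<close>)
      then show ?thesis using that by blast
    qed
    have jlen: "j \<le> length st" using jle ij0 by (simp add: vs_def)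
    have j1: "j \<ge> 1" using ij by simp
    have dist: "distinct (take j vs)"
    proof (subst distinct_conv_nth, intro allI impI)
      fix x y assume xy: "x < length (take j vs)" "y < length (take j vs)" "x \<noteq> y"
      then have xj: "x < j" "y < j" by auto
      show "take j vs ! x \<noteq> take j vs ! y"
      proof (cases "x < y")
        case True then show ?thesis using jmin[of x y] xj by simp
      next
        case False then have "y < x" using xy by simp
        then show ?thesis using jmin[of y x] xj by simp
      qed
    qed
    have takevs: "take j vs = a # map snd (take (j - 1) st)"
      using j1 by (cases j) (auto simp: vs_def take_map)
    have d1: "distinct (a # map snd (take (j-1) st))" using dist takevs by simp
    have f1: "foldl (lestep a) [] (take (j-1) st) = take (j-1) st"
      using distinct_foldl_id[of a "[]" "take (j-1) st"] d1 by simp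
    have di0: "a # map snd (take i st) = take (Suc i) (a # map snd (take (j-1) st))"
    proof -
      have ile: "i \<le> j - 1" using ij by linarith
      then show ?thesis by (simp add: take_map min_def)
    qed
    have di: "distinct (a # map snd (take i st))"
      unfolding di0 by (rule distinct_take) (rule d1)
    have fi: "foldl (lestep a) [] (take i st) = take i st"
      using distinct_foldl_id[of a "[]" "take i st"] di by simp
    have jS: "j = Suc (j - 1)" using j1 by simp
    have stj: "take j st = take (j-1) st @ [st ! (j-1)]"
      using jlen j1 by (subst jS) (rule take_Suc_conv_app_nth, simp)
    have vsj: "vs ! j = snd (st ! (j-1))"
      using j1 jlen by (cases j) (auto simp: vs_def)
    have step: "lestep a (take (j-1) st) (st ! (j-1)) = take i st"
    proof (cases i)
      case 0
      then have "snd (st ! (j-1)) = a" using ij vsj by (simp add: vs_def)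
      then show ?thesis using 0 by (simp add: lestep_def)
    next
      case (Suc p)
      have pj: "p < j - 1" using ilj Suc by arith
      have e1: "vs ! i = snd (st ! p)" using Suc pj jlen by (simp add: vs_def)
      have u: "snd (st ! (j-1)) = map snd (take (j-1) st) ! p"
        using e1 ij vsj pj jlen by simp
      have pl: "p < length (take (j-1) st)" using pj jlen by simp
      have ua: "snd (st ! (j-1)) \<noteq> a"
        using imin[of 0] Suc vsj by (simp add: vs_def)
      have mem: "snd (st ! (j-1)) \<in> snd ` set (take (j-1) st)"
        using u pl by (metis length_map nth_mem set_map)
      have nin: "snd (st ! (j-1)) \<notin> set (take p (map snd (take (j-1) st)))"
      proof
        assume "snd (st ! (j-1)) \<in> set (take p (map snd (take (j-1) st)))"
        then obtain q where q: "q < p" "map snd (take (j-1) st) ! q = snd (st ! (j-1))"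
          using pl by (auto simp: in_set_conv_nth)
        have "vs ! Suc q = vs ! j" using q vsj pl by (simp add: vs_def)
        then show False using imin[of "Suc q"] q Suc by simp
      qed
      have "lcut (snd (st ! (j-1))) (take (j-1) st) = take (Suc p) (take (j-1) st)"
        by (rule lcut_take_nth[OF _ u[symmetric] nin]) (use pl in simp)
      then show ?thesis using Suc ua mem pj by (simp add: lestep_def min_def)
    qed
    have "LEi a st = foldl (lestep a) (foldl (lestep a) [] (take j st)) (drop j st)"
      unfolding LEi_def by (metis append_take_drop_id foldl_append)
    also have "foldl (lestep a) [] (take j st) = take i st"
      using stj f1 step by simp
    also have "foldl (lestep a) (take i st) (drop j st) = LEi a (take i st @ drop j st)"
      unfolding LEi_def using fi by simp
    finally show ?thesis using LEs IH by simp
  qed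
qed

abbreviation VL :: "'v \<Rightarrow> ('e \<times> 'v) list \<Rightarrow> 'v list" where
  "VL a st \<equiv> a # map snd st"

definition lastv :: "'v \<Rightarrow> ('e \<times> 'v) list \<Rightarrow> 'v" where
  "lastv a xs = (if xs = [] then a else snd (last xs))"

lemma last_VL: "last (VL a xs) = lastv a xs"
  by (induction xs) (auto simp: lastv_def)

lemma lastv_append: "lastv a (xs @ ys) = lastv (lastv a xs) ys"
  by (auto simp: lastv_def)

lemma lastv_Cons[simp]: "lastv a (x # xs) = lastv (snd x) xs"
  by (auto simp: lastv_def)

lemma lastv_Nil[simp]: "lastv a [] = a"
  by (auto simp: lastv_def)

lemma lastv_take: "t \<le> length st \<Longrightarrow> lastv a (take t st) = VL a st ! t"
proof (induction st arbitrary: a t)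
  case Nil then show ?case by simp
next
  case (Cons x st)
  then show ?case by (cases t) auto
qed

lemma last_VL_step: "lastv a (lestep a cur x) = snd x"
proof -
  consider "snd x = a" | "snd x \<noteq> a" "snd x \<in> snd ` set cur" | "snd x \<noteq> a" "snd x \<notin> snd ` set cur" by blast
  then show ?thesis
  proof cases
    case 1 then show ?thesis by (simp add: lestep_def lastv_def)
  next
    case 2
    then have "lcut (snd x) cur \<noteq> [] \<and> snd (last (lcut (snd x) cur)) = snd x" by (intro lcut_last)
    then show ?thesis using 2 by (simp add: lestep_def lastv_def)
  next
    case 3 then show ?thesis by (simp add: lestep_def lastv_def)
  qed
qed

lemma last_VL_foldl:
  "lastv a (foldl (lestep a) cur xs) = (if xs = [] then lastv a cur else snd (last xs))"
proof (induction xs arbitrary: cur)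
  case Nil then show ?case by simp
next
  case (Cons x xs)
  then show ?case using last_VL_step[of a cur x] by (cases xs) auto
qed

lemma VL_take_prefix: "VL a (take n cur) = take (Suc n) (VL a cur)"
  by (simp add: take_map)

lemma distinct_step: "distinct (VL a cur) \<Longrightarrow> distinct (VL a (lestep a cur x))"
proof -
  assume d: "distinct (VL a cur)"
  obtain n where n: "lcut (snd x) cur = take n cur" using lcut_take[of "snd x" cur] by blast
  have "distinct (VL a (take n cur))"
    unfolding VL_take_prefix by (rule distinct_take) (rule d)
  then show ?thesis using d n by (auto simp: lestep_def)
qed

lemma distinct_foldl: "distinct (VL a cur) \<Longrightarrow> distinct (VL a (foldl (lestep a) cur xs))"
  by (induction xs arbitrary: cur) (auto intro: distinct_step simp del: distinct.simps)

lemma steps_ok_append: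
  "steps_ok src tgt v (xs @ ys) \<longleftrightarrow> steps_ok src tgt v xs \<and> steps_ok src tgt (lastv v xs) ys"
proof (induction xs arbitrary: v)
  case Nil then show ?case by simp
next
  case (Cons x xs)
  obtain e u where x: "x = (e, u)" by (cases x)
  show ?case using Cons.IH[of u] by (simp add: x)
qed

lemma steps_ok_take: "steps_ok src tgt v xs \<Longrightarrow> steps_ok src tgt v (take n xs)"
  using steps_ok_append[of src tgt v "take n xs" "drop n xs"] by simp

lemma steps_ok_drop: "steps_ok src tgt v xs \<Longrightarrow> n \<le> length xs \<Longrightarrow> steps_ok src tgt ((VL v xs) ! n) (drop n xs)"
proof -
  assume a: "steps_ok src tgt v xs" "n \<le> length xs"
  have "lastv v (take n xs) = (VL v xs) ! n"
    using a(2) by (rule lastv_take)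
  then show ?thesis using a(1) steps_ok_append[of src tgt v "take n xs" "drop n xs"] by simp
qed

lemma steps_ok_step:
  assumes "steps_ok src tgt a cur" "src (fst x) = lastv a cur" "tgt (fst x) = snd x"
  shows "steps_ok src tgt a (lestep a cur x)"
proof -
  obtain n where n: "lcut (snd x) cur = take n cur" using lcut_take[of "snd x" cur] by blast
  have "steps_ok src tgt a (cur @ [x])"
    using assms by (cases x) (simp add: steps_ok_append)
  then show ?thesis using n assms(1) steps_ok_take by (auto simp: lestep_def)
qed

lemma steps_ok_foldl:
  "steps_ok src tgt a cur \<Longrightarrow> steps_ok src tgt (lastv a cur) xs \<Longrightarrow>
   steps_ok src tgt a (foldl (lestep a) cur xs)"
proof (induction xs arbitrary: cur)
  case Nil then show ?case by simp
next
  case (Cons x xs)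
  obtain e u where x: "x = (e, u)" by (cases x)
  have s: "steps_ok src tgt a (lestep a cur x)"
    using Cons.prems x by (intro steps_ok_step) auto
  have "lastv a (lestep a cur x) = u" using last_VL_step x by (metis snd_conv)
  then show ?case using Cons.IH[OF s] Cons.prems x by simp
qed

lemma set_step: "set (VL a (lestep a cur x)) \<subseteq> set (VL a cur) \<union> {snd x}"
proof -
  obtain n where n: "lcut (snd x) cur = take n cur" using lcut_take[of "snd x" cur] by blast
  then show ?thesis by (auto simp: lestep_def dest: in_set_takeD)
qed

lemma set_foldl: "set (VL a (foldl (lestep a) cur xs)) \<subseteq> set (VL a cur) \<union> snd ` set xs"
proof (induction xs arbitrary: cur)
  case Nil then show ?case by simp
next
  case (Cons x xs)
  show ?case using Cons.IH[of "lestep a cur x"] set_step[of a cur x] by auto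
qed

lemma persist:
  "v \<notin> set (VL a s) \<Longrightarrow> v \<notin> snd ` set xs \<Longrightarrow> v \<notin> set (VL a (foldl (lestep a) s xs))"
  using set_foldl[of a s xs] by blast

lemma lcut_append1: "u \<notin> snd ` set cur \<Longrightarrow> lcut u (cur @ y) = cur @ lcut u y"
  by (induction cur) auto

lemma lcut_append2: "u \<in> snd ` set cur \<Longrightarrow> lcut u (cur @ y) = lcut u cur"
  by (induction cur) auto

lemma concat_step:
  assumes "snd z \<notin> set (VL a cur)"
  shows "lestep a (cur @ y) z = cur @ lestep (lastv a cur) y z"
proof -
  have w: "lastv a cur \<in> set (VL a cur)" unfolding last_VL[symmetric] by (rule last_in_set) simp
  have ne: "snd z \<noteq> lastv a cur"
  proof
    assume "snd z = lastv a cur"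
    then have "snd z \<in> set (VL a cur)" using w by simp
    then show False using assms by blast
  qed
  have u1: "snd z \<noteq> a" and u2: "snd z \<notin> snd ` set cur" using assms by auto
  have m: "(snd z \<in> snd ` set (cur @ y)) = (snd z \<in> snd ` set y)" using u2 by auto
  show ?thesis unfolding lestep_def m using u1 ne lcut_append1[OF u2, of y] by simp
qed

lemma concat_foldl:
  assumes "\<forall>z\<in>set rest. snd z \<notin> set (VL a cur)"
  shows "foldl (lestep a) (cur @ y) rest = cur @ foldl (lestep (lastv a cur)) y rest"
  using assms
proof (induction rest arbitrary: y)
  case Nil then show ?case by simp
next
  case (Cons z rest)
  have "lestep a (cur @ y) z = cur @ lestep (lastv a cur) y z"
    using Cons.prems by (intro concat_step) auto
  then show ?case using Cons.IH[of "lestep (lastv a cur) y z"] Cons.prems by simp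
qed

lemma LEi_split:
  assumes t: "t \<le> length st"
    and v: "v = VL a st ! t"
    and vnot: "v \<notin> snd ` set (drop t st)"
    and vin: "v \<in> set (VL a (LEi a st))"
  shows "(\<forall>z\<in>set (drop t st). snd z \<notin> set (VL a (LEi a (take t st))))"
    and "lastv a (LEi a (take t st)) = v"
    and "LEi a st = LEi a (take t st) @ LEi v (drop t st)"
proof -
  define cur where "cur = LEi a (take t st)"
  have lastcur: "lastv a cur = v"
  proof (cases t)
    case 0 then show ?thesis using v by (simp add: cur_def LEi_def)
  next
    case (Suc t')
    then have ne: "take t st \<noteq> []" using t by (cases st) auto
    have "lastv a cur = snd (last (take t st))" using ne by (simp add: cur_def LEi_def last_VL_foldl)
    also have "\<dots> = lastv a (take t st)" using ne by (simp add: lastv_def)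
    also have "\<dots> = v" using v t by (simp add: lastv_take)
    finally show ?thesis .
  qed
  have dcur: "distinct (VL a cur)" unfolding cur_def LEi_def by (rule distinct_foldl) simp
  have full: "LEi a st = foldl (lestep a) cur (drop t st)"
    unfolding cur_def LEi_def using foldl_append[of "lestep a" "[]" "take t st" "drop t st"] by simp
  show avoid: "\<forall>z\<in>set (drop t st). snd z \<notin> set (VL a (LEi a (take t st)))"
  proof (rule ccontr)
    assume "\<not> ?thesis"
    then have "\<exists>z\<in>set (drop t st). snd z \<in> set (VL a cur)" by (auto simp: cur_def)
    from split_list_first_prop[OF this] obtain r1 z r2 where sp: "drop t st = r1 @ z # r2" and zin: "snd z \<in> set (VL a cur)"
      and r1: "\<forall>z'\<in>set r1. snd z' \<notin> set (VL a cur)"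
      by blast
    define Y where "Y = foldl (lestep v) [] r1"
    have f1: "foldl (lestep a) cur r1 = cur @ Y"
      using concat_foldl[of r1 a cur "[]"] r1 lastcur by (simp add: Y_def)
    have uv: "snd z \<noteq> v" using vnot sp by auto
    have vnin: "v \<notin> set (VL a (lestep a (cur @ Y) z))"
    proof (cases "snd z = a")
      case True then show ?thesis using uv by (simp add: lestep_def)
    next
      case False
      then have uc: "snd z \<in> snd ` set cur" using zin by auto
      then have ls: "lestep a (cur @ Y) z = lcut (snd z) cur"
        using False by (auto simp: lestep_def lcut_append2)
      obtain n where n: "lcut (snd z) cur = take n cur" using lcut_take[of "snd z" cur] by blast
      have ln: "lastv a (take n cur) = snd z"
        using lcut_last[OF uc] n by (simp add: lastv_def)
      show ?thesis
      proof
        assume "v \<in> set (VL a (lestep a (cur @ Y) z))"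
        then have vP: "v \<in> set (take (Suc n) (VL a cur))" using ls n VL_take_prefix[of a n cur] by simp
        then obtain q where q: "q < length (take (Suc n) (VL a cur))" "take (Suc n) (VL a cur) ! q = v"
          unfolding in_set_conv_nth by blast
        define L where "L = VL a cur"
        have qn: "q < Suc n" using q(1) by simp
        have q1: "q < length L" using q(1) by (simp add: L_def)
        have "L ! q = take (Suc n) L ! q" by (rule nth_take[symmetric]) (rule qn)
        also have "\<dots> = v" using q(2) by (simp only: L_def)
        finally have qL: "q < length L" "L ! q = v" using q1 by auto
        have vl: "L ! (length L - 1) = v"
        proof -
          have "last L = L ! (length L - 1)" by (rule last_conv_nth) (simp add: L_def)
          moreover have "last L = v" using lastcur last_VL[of a cur] by (simp only: L_def)
          ultimately show ?thesis by simp
        qed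
        have "q = length L - 1"
          using nth_eq_iff_index_eq[of L q "length L - 1"] dcur qL vl by (simp add: L_def)
        then have "length (take (Suc n) L) = length L" using q by (auto simp: L_def)
        then have "take (Suc n) L = L" by simp
        then have "lastv a (take n cur) = v" using VL_take_prefix[of a n cur] lastcur last_VL[of a "take n cur"] last_VL[of a cur] by (simp add: L_def)
        then show False using ln uv by simp
      qed
    qed
    have "LEi a st = foldl (lestep a) (lestep a (cur @ Y) z) r2"
      using full sp f1 by simp
    then have "v \<notin> set (VL a (LEi a st))"
      using persist[OF vnin, of r2] vnot sp by auto
    then show False using vin by simp
  qed
  show "lastv a (LEi a (take t st)) = v" using lastcur by (simp add: cur_def)
  show "LEi a st = LEi a (take t st) @ LEi v (drop t st)"
    using full concat_foldl[of "drop t st" a cur "[]"] avoid lastcur by (simp add: cur_def LEi_def)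
qed

lemma walk_verts_VL: "walk_verts p = VL (fst p) (snd p)"
  by (simp add: walk_verts_def)

lemma LE_pair: "LE p = (fst p, LEi (fst p) (snd p))"
  using LE_eq[of "fst p" "snd p"] by simp

lemma lastv_LEi: "lastv a (LEi a st) = lastv a st"
  unfolding LEi_def last_VL_foldl by (simp add: lastv_def)

lemma is_walk_alt: "is_walk src tgt x y p \<longleftrightarrow> fst p = x \<and> lastv (fst p) (snd p) = y \<and> steps_ok src tgt (fst p) (snd p)"
  unfolding is_walk_def walk_verts_VL last_VL by simp

lemma LE_walk: "is_walk src tgt x y p \<Longrightarrow> is_walk src tgt x y (LE p)"
  unfolding is_walk_alt LE_pair
  using steps_ok_foldl[of src tgt "fst p" "[]" "snd p"] lastv_LEi[of "fst p" "snd p"]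
  by (auto simp: LEi_def)

lemma LE_verts: "set (walk_verts (LE p)) \<subseteq> set (walk_verts p)"
  unfolding walk_verts_VL LE_pair LEi_def using set_foldl[of "fst p" "[]" "snd p"] by auto

lemma LE_distinct: "distinct (walk_verts (LE p))"
  unfolding walk_verts_VL LE_pair LEi_def by simp (rule distinct_foldl[of _ "[]", simplified])

definition wsplice :: "('v, 'e) walk \<Rightarrow> ('v, 'e) walk \<Rightarrow> nat \<Rightarrow> nat \<Rightarrow> ('v, 'e) walk" where
  "wsplice P Q tP tQ = (fst P, take tP (snd P) @ drop tQ (snd Q))"

lemma wsplice_walk:
  assumes P: "is_walk src tgt x y P" and Q: "is_walk src tgt x' y' Q"
    and tP: "tP \<le> length (snd P)" and tQ: "tQ \<le> length (snd Q)"
    and eq: "walk_verts P ! tP = walk_verts Q ! tQ"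
  shows "is_walk src tgt x y' (wsplice P Q tP tQ)"
proof -
  have l1: "lastv (fst P) (take tP (snd P)) = walk_verts Q ! tQ"
    using lastv_take[OF tP] eq by (simp add: walk_verts_VL)
  have s1: "steps_ok src tgt (fst P) (take tP (snd P))"
    using P steps_ok_take by (auto simp: is_walk_alt)
  have s2: "steps_ok src tgt (walk_verts Q ! tQ) (drop tQ (snd Q))"
    using Q steps_ok_drop[OF _ tQ] by (auto simp: is_walk_alt walk_verts_VL)
  have l2: "lastv (fst Q) (take tQ (snd Q)) = walk_verts Q ! tQ"
    using lastv_take[OF tQ] by (simp add: walk_verts_VL)
  have "lastv (fst Q) (snd Q) = lastv (walk_verts Q ! tQ) (drop tQ (snd Q))"
    using lastv_append[of "fst Q" "take tQ (snd Q)" "drop tQ (snd Q)"] l2 by simp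
  then have l3: "lastv (walk_verts Q ! tQ) (drop tQ (snd Q)) = y'" using Q by (simp add: is_walk_alt)
  show ?thesis
    unfolding is_walk_alt wsplice_def using P s1 s2 l1 l3
    by (simp add: steps_ok_append lastv_append is_walk_alt)
qed

lemma wsplice_verts:
  "walk_verts (wsplice P Q tP tQ) = take (Suc tP) (walk_verts P) @ map snd (drop tQ (snd Q))"
  unfolding wsplice_def walk_verts_VL by (simp add: take_map)

lemma wsplice_verts_subset:
  "set (walk_verts (wsplice P Q tP tQ)) \<subseteq> set (walk_verts P) \<union> set (walk_verts Q)"
proof -
  have "set (take (Suc tP) (walk_verts P)) \<subseteq> set (walk_verts P)" by (rule set_take_subset)
  moreover have "set (map snd (drop tQ (snd Q))) \<subseteq> set (walk_verts Q)"
    using set_drop_subset[of tQ "snd Q"] by (auto simp: walk_verts_VL)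
  ultimately show ?thesis unfolding wsplice_verts by auto
qed

lemma wmon_wsplice:
  "wmon (wsplice P Q tP tQ) + wmon (wsplice Q P tQ tP) = wmon P + wmon Q"
proof -
  have "\<And>n xs. mset (map fst (take n xs)) + mset (map fst (drop n xs)) = mset (map fst (xs :: ('a \<times> 'b) list))"
    by (metis append_take_drop_id map_append mset_append)
  then show ?thesis unfolding wsplice_def wmon_def
    by (simp add: ac_simps) (metis (no_types) add.assoc add.commute)
qed

definition lidx :: "('v, 'e) walk \<Rightarrow> 'v \<Rightarrow> nat" where
  "lidx p v = (GREATEST t. t \<le> length (snd p) \<and> walk_verts p ! t = v)"

lemma lidx:
  assumes "v \<in> set (walk_verts p)"
  shows "lidx p v \<le> length (snd p)" "walk_verts p ! lidx p v = v"
    "v \<notin> snd ` set (drop (lidx p v) (snd p))"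
proof -
  obtain t where t: "t < length (walk_verts p)" "walk_verts p ! t = v"
    using assms by (auto simp: in_set_conv_nth)
  have ex: "t \<le> length (snd p) \<and> walk_verts p ! t = v" using t by (simp add: walk_verts_def)
  have bnd: "\<forall>y. y \<le> length (snd p) \<and> walk_verts p ! y = v \<longrightarrow> y \<le> length (snd p)" by simp
  have G: "lidx p v \<le> length (snd p) \<and> walk_verts p ! lidx p v = v"
    unfolding lidx_def by (rule GreatestI_nat[of "\<lambda>t. t \<le> length (snd p) \<and> walk_verts p ! t = v" t "length (snd p)"]) (use ex in auto)
  then show "lidx p v \<le> length (snd p)" "walk_verts p ! lidx p v = v" by auto
  show "v \<notin> snd ` set (drop (lidx p v) (snd p))"
  proof
    assume "v \<in> snd ` set (drop (lidx p v) (snd p))"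
    then obtain q where q: "q < length (drop (lidx p v) (snd p))" "snd (drop (lidx p v) (snd p) ! q) = v"
      by (auto simp: in_set_conv_nth)
    define s where "s = Suc (lidx p v + q)"
    have s1: "s \<le> length (snd p)" using q(1) by (simp add: s_def)
    have s2: "walk_verts p ! s = v" using q by (simp add: s_def walk_verts_def)
    have "s \<le> lidx p v" unfolding lidx_def[of p v]
      by (rule Greatest_le_nat[of _ s "length (snd p)"]) (use s1 s2 in auto)
    then show False by (simp add: s_def)
  qed
qed

lemma lidx_eq:
  assumes "t \<le> length (snd p)" "walk_verts p ! t = v" "v \<notin> snd ` set (drop t (snd p))"
  shows "lidx p v = t"
proof -
  have vin: "v \<in> set (walk_verts p)" using assms(1,2) by (metis length_Cons nth_mem walk_verts_def le_imp_less_Suc length_map snd_conv)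
  show ?thesis
  proof (rule ccontr)
    assume ne: "lidx p v \<noteq> t"
    have le: "t \<le> lidx p v" unfolding lidx_def
      by (rule Greatest_le_nat[of _ t "length (snd p)"]) (use assms in auto)
    then have lt: "t < lidx p v" using ne by simp
    have "walk_verts p ! lidx p v = v" "lidx p v \<le> length (snd p)" using lidx[OF vin] by auto
    then have "snd (snd p ! (lidx p v - 1)) = v" using lt by (simp add: walk_verts_def)
    moreover have "snd p ! (lidx p v - 1) \<in> set (drop t (snd p))"
    proof -
      have i1: "lidx p v - 1 - t < length (drop t (snd p))" using lt \<open>lidx p v \<le> length (snd p)\<close> by simp
      have "drop t (snd p) ! (lidx p v - 1 - t) = snd p ! (lidx p v - 1)"
        using lt \<open>lidx p v \<le> length (snd p)\<close> by (simp add: nth_drop)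
      then show ?thesis using nth_mem[OF i1] by simp
    qed
    ultimately show False using assms(3) by force
  qed
qed

lemma distinct_split_unique:
  "distinct (xs1 @ v # ys1) \<Longrightarrow> xs1 @ v # ys1 = xs2 @ v # ys2 \<Longrightarrow> xs1 = xs2"
proof (induction xs1 arbitrary: xs2)
  case Nil then show ?case by (cases xs2) auto
next
  case (Cons x xs1)
  show ?case
  proof (cases xs2)
    case Nil then show ?thesis using Cons.prems by auto
  next
    case (Cons y xs2')
    then have "x = y" "xs1 @ v # ys1 = xs2' @ v # ys2" using Cons.prems by auto
    moreover have "distinct (xs1 @ v # ys1)" using Cons.prems(1) by simp
    ultimately show ?thesis using Cons.IH[of xs2'] Cons by simp
  qed
qed

lemma hd_dropWhile_first:
  "set L1 \<inter> U = {} \<Longrightarrow> v \<in> U \<Longrightarrow> hd (dropWhile (\<lambda>x. x \<notin> U) (L1 @ v # R)) = v"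
  by (induction L1) auto

definition badpair :: "nat \<Rightarrow> (nat \<Rightarrow> ('v, 'e) walk) \<Rightarrow> nat \<Rightarrow> nat \<Rightarrow> bool" where
  "badpair k f i j \<longleftrightarrow> i < j \<and> j < k \<and> set (walk_verts (f j)) \<inter> set (walk_verts (LE (f i))) \<noteq> {}"

definition bad :: "nat \<Rightarrow> (nat \<Rightarrow> ('v, 'e) walk) \<Rightarrow> bool" where
  "bad k f \<longleftrightarrow> (\<exists>i j. badpair k f i j)"

definition ib :: "nat \<Rightarrow> (nat \<Rightarrow> ('v, 'e) walk) \<Rightarrow> nat" where
  "ib k f = (LEAST i. \<exists>j. badpair k f i j)"

definition Uset :: "nat \<Rightarrow> (nat \<Rightarrow> ('v, 'e) walk) \<Rightarrow> nat \<Rightarrow> 'v set" where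
  "Uset k f i = (\<Union>m\<in>{i<..<k}. set (walk_verts (f m)))"

definition vb :: "nat \<Rightarrow> (nat \<Rightarrow> ('v, 'e) walk) \<Rightarrow> 'v" where
  "vb k f = hd (dropWhile (\<lambda>x. x \<notin> Uset k f (ib k f)) (walk_verts (LE (f (ib k f)))))"

definition jb :: "nat \<Rightarrow> (nat \<Rightarrow> ('v, 'e) walk) \<Rightarrow> nat" where
  "jb k f = (LEAST j. ib k f < j \<and> j < k \<and> vb k f \<in> set (walk_verts (f j)))"

definition swp :: "nat \<Rightarrow> (nat \<Rightarrow> ('v, 'e) walk) \<Rightarrow> (nat \<Rightarrow> ('v, 'e) walk)" where
  "swp k f = (let i = ib k f; j = jb k f; v = vb k f; P = f i; Q = f j in
     f(i := wsplice P Q (lidx P v) (lidx Q v), j := wsplice Q P (lidx Q v) (lidx P v)))"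

lemma swp_props:
  assumes bd: "bad k f"
    and walks: "\<And>m. m < k \<Longrightarrow> is_walk src tgt (a m) (c m) (f m)"
  shows "ib k f < jb k f" "jb k f < k"
    "is_walk src tgt (a (ib k f)) (c (jb k f)) (swp k f (ib k f))"
    "is_walk src tgt (a (jb k f)) (c (ib k f)) (swp k f (jb k f))"
    "\<And>m. m \<noteq> ib k f \<Longrightarrow> m \<noteq> jb k f \<Longrightarrow> swp k f m = f m"
    "bad k (swp k f)" "ib k (swp k f) = ib k f" "jb k (swp k f) = jb k f"
    "swp k (swp k f) = f"
    "wmon (swp k f (ib k f)) + wmon (swp k f (jb k f)) = wmon (f (ib k f)) + wmon (f (jb k f))"
proof -
  define i where "i = ib k f"
  have exi: "\<exists>j. badpair k f i j"
    unfolding i_def ib_def by (rule LeastI_ex) (use bd in \<open>simp add: bad_def\<close>)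
  have imin: "\<not> badpair k f l m" if "l < i" for l m
    using not_less_Least[of l "\<lambda>i. \<exists>j. badpair k f i j"] that unfolding i_def ib_def by blast
  obtain j0 where bp: "badpair k f i j0" using exi by blast
  have ij0: "i < j0" "j0 < k" using bp by (auto simp: badpair_def)
  define L where "L = walk_verts (LE (f i))"
  define U where "U = Uset k f i"
  have exU: "\<exists>x\<in>set L. \<not> (x \<notin> U)"
    using bp ij0 unfolding badpair_def L_def U_def Uset_def by auto
  define v where "v = vb k f"
  have v_def': "v = hd (dropWhile (\<lambda>x. x \<notin> U) L)"
    unfolding v_def vb_def U_def L_def i_def by simp
  have dw: "dropWhile (\<lambda>x. x \<notin> U) L \<noteq> []"
    using exU by (simp add: dropWhile_eq_Nil_conv)
  have vU: "v \<in> U" using hd_dropWhile[OF dw] v_def' by simp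
  define L1 where "L1 = takeWhile (\<lambda>x. x \<notin> U) L"
  define R where "R = tl (dropWhile (\<lambda>x. x \<notin> U) L)"
  have Ldec: "L = L1 @ v # R"
    unfolding L1_def R_def v_def' using dw takeWhile_dropWhile_id[of "\<lambda>x. x \<notin> U" L] by simp
  have L1U: "set L1 \<inter> U = {}"
    unfolding L1_def by (auto dest: set_takeWhileD)
  have vL: "v \<in> set L" using Ldec by simp
  define j where "j = jb k f"
  have exj: "\<exists>m. i < m \<and> m < k \<and> v \<in> set (walk_verts (f m))"
    using vU unfolding U_def Uset_def by auto
  have jdef': "j = (LEAST j. i < j \<and> j < k \<and> v \<in> set (walk_verts (f j)))"
    unfolding j_def jb_def i_def v_def by (rule refl)
  have jprop: "i < j \<and> j < k \<and> v \<in> set (walk_verts (f j))"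
    unfolding jdef' by (rule LeastI_ex) (rule exj)
  have ij: "i < j" "j < k" "v \<in> set (walk_verts (f j))" using jprop by auto
  have jmin: "v \<notin> set (walk_verts (f m))" if "i < m" "m < j" for m
  proof
    assume vm: "v \<in> set (walk_verts (f m))"
    have "m < (LEAST j. i < j \<and> j < k \<and> v \<in> set (walk_verts (f j)))" using that(2) jdef' by simp
    then have "\<not> (i < m \<and> m < k \<and> v \<in> set (walk_verts (f m)))" by (rule not_less_Least)
    then show False using that ij vm by simp
  qed
  have avoidL1: "set (walk_verts (f m)) \<inter> set L1 = {}" if "i < m" "m < k" for m
  proof -
    have "set (walk_verts (f m)) \<subseteq> U" using that unfolding U_def Uset_def by auto
    then show ?thesis using L1U by blast
  qed
  define P where "P = f i"
  define Q where "Q = f j"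
  have ik: "i < k" using ij by simp
  have Pw: "is_walk src tgt (a i) (c i) P" using walks[OF ik] by (simp add: P_def)
  have Qw: "is_walk src tgt (a j) (c j) Q" using walks[OF ij(2)] by (simp add: Q_def)
  have vP: "v \<in> set (walk_verts P)" unfolding P_def by (rule subsetD[OF LE_verts vL[unfolded L_def]])
  have vQ: "v \<in> set (walk_verts Q)" using ij by (simp add: Q_def)
  define tP where "tP = lidx P v"
  define tQ where "tQ = lidx Q v"
  note lP = lidx[OF vP, folded tP_def]
  note lQ = lidx[OF vQ, folded tQ_def]
  define ai where "ai = fst P"
  define sP where "sP = snd P"
  define sQ where "sQ = snd Q"
  have LP: "L = VL ai (LEi ai sP)" unfolding L_def P_def[symmetric] LE_pair walk_verts_VL ai_def sP_def by simp
  have spl_hyps: "tP \<le> length sP" "v = VL ai sP ! tP" "v \<notin> snd ` set (drop tP sP)"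
    "v \<in> set (VL ai (LEi ai sP))"
    using lP vL LP by (auto simp: sP_def ai_def walk_verts_VL)
  define cur where "cur = LEi ai (take tP sP)"
  note spl = LEi_split[OF spl_hyps, folded cur_def]
  have LPc: "L = VL ai cur @ map snd (LEi v (drop tP sP))"
    using LP spl(3) by simp
  have lastEq: "last (VL ai cur) = v" by (subst last_VL) (rule spl(2))
  have e: "VL ai cur = butlast (VL ai cur) @ [last (VL ai cur)]"
    by (rule append_butlast_last_id[symmetric]) simp
  define B0 where "B0 = butlast (VL ai cur)"
  have VLc: "VL ai cur = B0 @ [v]" using e unfolding lastEq B0_def[symmetric] .
  have LB: "L = B0 @ v # map snd (LEi v (drop tP sP))"
    using LPc VLc by simp
  have dL: "distinct (L1 @ v # R)" using LE_distinct[of "f i"] Ldec unfolding L_def by simp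
  have L1eq: "L1 = B0"
    using distinct_split_unique[OF dL, of B0 "map snd (LEi v (drop tP sP))"] Ldec LB by simp
  have setcur: "set (VL ai cur) = set L1 \<union> {v}"
    using VLc L1eq by simp
  have QL1: "set (walk_verts Q) \<inter> set L1 = {}" using avoidL1[OF ij(1) ij(2)] by (simp add: Q_def)
  have avoidQ: "\<forall>z\<in>set (drop tQ sQ). snd z \<notin> set (VL ai cur)"
  proof
    fix z assume z: "z \<in> set (drop tQ sQ)"
    then have "snd z \<in> set (walk_verts Q)" by (auto simp: walk_verts_VL sQ_def dest: in_set_dropD)
    then have "snd z \<notin> set L1" using QL1 by auto
    moreover have "snd z \<noteq> v" using lQ(3) z by (auto simp: sQ_def)
    ultimately show "snd z \<notin> set (VL ai cur)" using setcur by auto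
  qed
  define P' where "P' = wsplice P Q tP tQ"
  define Q' where "Q' = wsplice Q P tQ tP"
  have fstP': "fst P' = ai" by (simp add: P'_def wsplice_def ai_def)
  have sndP': "snd P' = take tP sP @ drop tQ sQ" by (simp add: P'_def wsplice_def sP_def sQ_def)
  have sndQ': "snd Q' = take tQ sQ @ drop tP sP" by (simp add: Q'_def wsplice_def sP_def sQ_def)
  have LEP': "LEi ai (snd P') = cur @ LEi v (drop tQ sQ)"
  proof -
    have "LEi ai (snd P') = foldl (lestep ai) cur (drop tQ sQ)"
      unfolding sndP' LEi_def cur_def by simp
    also have "\<dots> = foldl (lestep ai) (cur @ []) (drop tQ sQ)" by simp
    also have "\<dots> = cur @ foldl (lestep (lastv ai cur)) [] (drop tQ sQ)"
      by (rule concat_foldl) (rule avoidQ)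
    finally show ?thesis using spl(2) by (simp add: LEi_def)
  qed
  have L'dec: "walk_verts (LE P') = L1 @ v # map snd (LEi v (drop tQ sQ))"
  proof -
    have "walk_verts (LE P') = VL ai (cur @ LEi v (drop tQ sQ))"
      unfolding LE_pair walk_verts_VL fstP' LEP' by simp
    also have "\<dots> = VL ai cur @ map snd (LEi v (drop tQ sQ))" by simp
    finally show ?thesis using VLc L1eq by simp
  qed
  have vQ': "v \<in> set (walk_verts Q')"
  proof -
    have "tQ < length (walk_verts Q)" using lQ(1) by (simp add: walk_verts_VL)
    then have "take (Suc tQ) (walk_verts Q) ! tQ = v" using lQ(2) by simp
    moreover have "tQ < length (take (Suc tQ) (walk_verts Q))" using lQ(1) by (simp add: walk_verts_VL)
    ultimately have "v \<in> set (take (Suc tQ) (walk_verts Q))" by (metis nth_mem)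
    then show ?thesis unfolding Q'_def wsplice_verts by simp
  qed
  have Q'L1: "set (walk_verts Q') \<inter> set L1 = {}"
  proof -
    have "set (take (Suc tQ) (walk_verts Q)) \<inter> set L1 = {}"
      using QL1 set_take_subset[of "Suc tQ" "walk_verts Q"] by blast
    moreover have "set (map snd (drop tP sP)) \<inter> set L1 = {}"
      using spl(1) setcur by auto
    ultimately show ?thesis unfolding Q'_def wsplice_verts sP_def by auto
  qed
  have P'sub: "set (walk_verts P') \<subseteq> set (walk_verts P) \<union> set (walk_verts Q)"
    unfolding P'_def by (rule wsplice_verts_subset)
  have Q'sub: "set (walk_verts Q') \<subseteq> set (walk_verts P) \<union> set (walk_verts Q)"
    unfolding Q'_def using wsplice_verts_subset[of Q P tQ tP] by blast
  have ijne: "i \<noteq> j" using ij by simp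
  define f' where "f' = f(i := P', j := Q')"
  have swpf: "swp k f = f'"
    unfolding swp_def f'_def P'_def Q'_def tP_def tQ_def P_def Q_def
    by (simp add: Let_def i_def[symmetric] j_def[symmetric] v_def[symmetric])
  have f'i: "f' i = P'" and f'j: "f' j = Q'" using ijne by (auto simp: f'_def)
  have f'o: "f' m = f m" if "m \<noteq> i" "m \<noteq> j" for m using that by (simp add: f'_def)
  have bp': "badpair k f' i j"
    using ij vQ' L'dec f'i f'j unfolding badpair_def by auto
  have imin': "\<not> badpair k f' l m" if "l < i" for l m
  proof
    assume b: "badpair k f' l m"
    have fl: "f' l = f l" using that ij by (intro f'o) auto
    have lm: "l < m" "m < k" using b by (auto simp: badpair_def)
    have nb: "\<not> badpair k f l i" "\<not> badpair k f l j" "\<not> badpair k f l m" using imin[OF that] by auto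
    have Pd: "set (walk_verts P) \<inter> set (walk_verts (LE (f l))) = {}"
      using nb(1) that ik unfolding badpair_def P_def by auto
    have Qd: "set (walk_verts Q) \<inter> set (walk_verts (LE (f l))) = {}"
      using nb(2) that ij unfolding badpair_def Q_def by auto
    have int: "set (walk_verts (f' m)) \<inter> set (walk_verts (LE (f l))) \<noteq> {}"
      using b fl unfolding badpair_def by auto
    show False
    proof (cases "m = i \<or> m = j")
      case True
      then have "set (walk_verts (f' m)) \<subseteq> set (walk_verts P) \<union> set (walk_verts Q)"
        using P'sub Q'sub f'i f'j by auto
      then show False using int Pd Qd by blast
    next
      case False
      then have "f' m = f m" using f'o by auto
      then show False using nb(3) int lm unfolding badpair_def by auto
    qed
  qed
  have ib': "ib k f' = i"
    unfolding ib_def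
  proof (rule Least_equality)
    show "\<exists>j. badpair k f' i j" using bp' by blast
    show "\<And>y. \<exists>j. badpair k f' y j \<Longrightarrow> i \<le> y" using imin' by (meson not_le)
  qed
  have U'L1: "set L1 \<inter> Uset k f' i = {}"
  proof -
    have "set (walk_verts (f' m)) \<inter> set L1 = {}" if "i < m" "m < k" for m
    proof (cases "m = j")
      case True then show ?thesis using Q'L1 f'j by simp
    next
      case False then show ?thesis using avoidL1[OF that] f'o[of m] that by simp
    qed
    then have H: "\<forall>m\<in>{i<..<k}. set (walk_verts (f' m)) \<inter> set L1 = {}" by simp
    then show ?thesis unfolding Uset_def by blast
  qed
  have vU': "v \<in> Uset k f' i" using ij vQ' f'j unfolding Uset_def by auto
  have vb': "vb k f' = v"
    unfolding vb_def ib' L'dec[folded f'i] using hd_dropWhile_first[OF U'L1 vU'] by simp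
  have jb': "jb k f' = j"
    unfolding jb_def ib' vb'
  proof (rule Least_equality)
    show "i < j \<and> j < k \<and> v \<in> set (walk_verts (f' j))" using ij vQ' f'j by simp
    fix y assume y: "i < y \<and> y < k \<and> v \<in> set (walk_verts (f' y))"
    show "j \<le> y"
    proof (rule ccontr)
      assume "\<not> j \<le> y"
      then have "y < j" by simp
      then have "f' y = f y" using y by (intro f'o) auto
      then show False using jmin[of y] y \<open>y < j\<close> by auto
    qed
  qed
  have tPle: "tP \<le> length sP" using lP(1) by (simp add: sP_def)
  have tQle: "tQ \<le> length sQ" using lQ(1) by (simp add: sQ_def)
  have lidxP': "lidx P' v = tP"
  proof (rule lidx_eq)
    show "tP \<le> length (snd P')" using tPle by (simp add: sndP')
    have "walk_verts P' = take (Suc tP) (walk_verts P) @ map snd (drop tQ (snd Q))"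
      unfolding P'_def by (rule wsplice_verts)
    moreover have "tP < length (take (Suc tP) (walk_verts P))" using tPle by (simp add: walk_verts_VL sP_def)
    ultimately have "walk_verts P' ! tP = take (Suc tP) (walk_verts P) ! tP" by (simp add: nth_append)
    also have "\<dots> = v" using lP(2) by simp
    finally show "walk_verts P' ! tP = v" .
    have "drop tP (snd P') = drop tQ sQ" using tPle by (simp add: sndP')
    then show "v \<notin> snd ` set (drop tP (snd P'))" using lQ(3) by (simp add: sQ_def)
  qed
  have lidxQ': "lidx Q' v = tQ"
  proof (rule lidx_eq)
    show "tQ \<le> length (snd Q')" using tQle by (simp add: sndQ')
    have "walk_verts Q' = take (Suc tQ) (walk_verts Q) @ map snd (drop tP (snd P))"
      unfolding Q'_def by (rule wsplice_verts)
    moreover have "tQ < length (take (Suc tQ) (walk_verts Q))" using tQle by (simp add: walk_verts_VL sQ_def)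
    ultimately have "walk_verts Q' ! tQ = take (Suc tQ) (walk_verts Q) ! tQ" by (simp add: nth_append)
    also have "\<dots> = v" using lQ(2) by simp
    finally show "walk_verts Q' ! tQ = v" .
    have "drop tQ (snd Q') = drop tP sP" using tQle by (simp add: sndQ')
    then show "v \<notin> snd ` set (drop tQ (snd Q'))" using lP(3) by (simp add: sP_def)
  qed
  have backP: "wsplice P' Q' tP tQ = P"
    using tPle tQle fstP' sndP' sndQ' by (simp add: wsplice_def ai_def sP_def)
  have backQ: "wsplice Q' P' tQ tP = Q"
  proof -
    have "fst Q' = fst Q" by (simp add: Q'_def wsplice_def)
    then show ?thesis using tPle tQle sndP' sndQ' by (simp add: wsplice_def sQ_def)
  qed
  show "ib k f < jb k f" "jb k f < k" using ij by (simp_all add: i_def j_def)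
  show "is_walk src tgt (a (ib k f)) (c (jb k f)) (swp k f (ib k f))"
    unfolding swpf i_def[symmetric] j_def[symmetric] f'i P'_def
    by (rule wsplice_walk[OF Pw Qw tPle[unfolded sP_def] tQle[unfolded sQ_def]]) (use lP lQ in simp)
  show "is_walk src tgt (a (jb k f)) (c (ib k f)) (swp k f (jb k f))"
    unfolding swpf i_def[symmetric] j_def[symmetric] f'j Q'_def
    by (rule wsplice_walk[OF Qw Pw tQle[unfolded sQ_def] tPle[unfolded sP_def]]) (use lP lQ in simp)
  show "\<And>m. m \<noteq> ib k f \<Longrightarrow> m \<noteq> jb k f \<Longrightarrow> swp k f m = f m"
    using f'o swpf by (simp add: i_def j_def)
  show "bad k (swp k f)" using bp' swpf unfolding bad_def by blast
  show "ib k (swp k f) = ib k f" using ib' swpf i_def by simp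
  show "jb k (swp k f) = jb k f" using jb' swpf j_def by simp
  show "swp k (swp k f) = f"
  proof -
    have "swp k f' = f'(i := wsplice P' Q' tP tQ, j := wsplice Q' P' tQ tP)"
      unfolding swp_def ib' jb' vb' by (simp add: Let_def f'i f'j lidxP' lidxQ')
    also have "\<dots> = f" using backP backQ ijne by (auto simp: f'_def P_def Q_def)
    finally show ?thesis using swpf by simp
  qed
  show "wmon (swp k f (ib k f)) + wmon (swp k f (jb k f)) = wmon (f (ib k f)) + wmon (f (jb k f))"
    using wmon_wsplice[of P Q tP tQ] swpf f'i f'j
    by (simp add: i_def[symmetric] j_def[symmetric] P'_def Q'_def P_def Q_def)
qed

definition crossing :: "('e \<Rightarrow> 'v) \<Rightarrow> ('e \<Rightarrow> 'v) \<Rightarrow> nat \<Rightarrow> (nat \<Rightarrow> 'v) \<Rightarrow> (nat \<Rightarrow> 'v) \<Rightarrow> bool" where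
  "crossing src tgt k a b \<longleftrightarrow> (\<forall>i i' j j'. i < i' \<and> i' < k \<and> j' < j \<and> j < k \<longrightarrow>
       (\<forall>p q. is_walk src tgt (a i) (b j) p \<and> is_walk src tgt (a i') (b j') q \<longrightarrow>
          set (walk_verts p) \<inter> set (walk_verts q) \<noteq> {}))"

lemma crossingD:
  assumes "crossing src tgt k a b" "i < i'" "i' < k" "j' < j" "j < k"
    "is_walk src tgt (a i) (b j) p" "is_walk src tgt (a i') (b j') q"
  shows "set (walk_verts p) \<inter> set (walk_verts q) \<noteq> {}"
  using assms(1)[unfolded crossing_def, rule_format, OF conjI[OF assms(2) conjI[OF assms(3) conjI[OF assms(4) assms(5)]]] conjI[OF assms(6) assms(7)]] .

lemma good_id:
  assumes cr: "crossing src tgt k a b" and sg: "\<sigma> permutes {..<k}"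
    and walks: "\<And>m. m < k \<Longrightarrow> is_walk src tgt (a m) (b (\<sigma> m)) (f m)"
    and nb: "\<not> bad k f"
  shows "\<sigma> = id"
proof -
  have inj: "inj \<sigma>" using sg by (rule permutes_inj)
  have img: "\<sigma> i < k" if "i < k" for i using permutes_in_image[OF sg] that by simp
  have asc: "\<sigma> i < \<sigma> (Suc i)" if "Suc i < k" for i
  proof (rule ccontr)
    assume "\<not> \<sigma> i < \<sigma> (Suc i)"
    moreover have "\<sigma> i \<noteq> \<sigma> (Suc i)"
    proof
      assume "\<sigma> i = \<sigma> (Suc i)"
      then have "i = Suc i" by (rule injD[OF inj])
      then show False by simp
    qed
    ultimately have lt: "\<sigma> (Suc i) < \<sigma> i" by simp
    have ik: "i < k" using that by simp
    have p: "is_walk src tgt (a i) (b (\<sigma> i)) (LE (f i))" by (rule LE_walk[OF walks[OF ik]])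
    have q: "is_walk src tgt (a (Suc i)) (b (\<sigma> (Suc i))) (f (Suc i))" by (rule walks[OF that])
    have "set (walk_verts (LE (f i))) \<inter> set (walk_verts (f (Suc i))) \<noteq> {}"
      by (rule crossingD[OF cr _ that lt img[OF ik] p q]) simp
    then have "set (walk_verts (f (Suc i))) \<inter> set (walk_verts (LE (f i))) \<noteq> {}"
      by (simp add: Int_commute)
    then have "badpair k f i (Suc i)" using that by (simp add: badpair_def)
    then show False using nb unfolding bad_def by blast
  qed
  have ge: "i < k \<longrightarrow> i \<le> \<sigma> i" for i
  proof (induction i)
    case 0 then show ?case by simp
  next
    case (Suc i)
    show ?case
    proof
      assume si: "Suc i < k"
      then have "i \<le> \<sigma> i" using Suc.IH by simp
      moreover have "\<sigma> i < \<sigma> (Suc i)" using asc[OF si] .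
      ultimately show "Suc i \<le> \<sigma> (Suc i)" by simp
    qed
  qed
  show ?thesis
    by (rule permutes_natset_ge[OF sg]) (use ge in auto)
qed

lemma vert_index:
  assumes "v \<in> set (walk_verts p)"
  obtains t where "t \<le> length (snd p)" "walk_verts p ! t = v"
  using lidx[OF assms] by blast

lemma consec_all:
  assumes cr: "crossing src tgt k a b"
    and walks: "\<And>m. m < k \<Longrightarrow> is_walk src tgt (a m) (b m) (f m)"
    and cons: "\<And>i. i + 1 < k \<Longrightarrow> set (walk_verts (f (i + 1))) \<inter> set (walk_verts (LE (f i))) = {}"
  shows "\<not> bad k f"
proof -
  have "\<forall>i j. j = i + Suc d \<longrightarrow> \<not> badpair k f i j" for d
  proof (induction d)
    case 0
    show ?case
    proof (intro allI impI notI)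
      fix i j assume j: "j = i + Suc 0" and b: "badpair k f i j"
      then have "i + 1 < k" by (simp add: badpair_def)
      from cons[OF this] b j show False by (simp add: badpair_def)
    qed
  next
    case (Suc d)
    show ?case
    proof (intro allI impI notI)
      fix i j assume j: "j = i + Suc (Suc d)" and b: "badpair k f i j"
      have jk: "j < k" using b by (simp add: badpair_def)
      have "set (walk_verts (f j)) \<inter> set (walk_verts (LE (f i))) \<noteq> {}" using b by (simp add: badpair_def)
      then obtain v where "v \<in> set (walk_verts (f j)) \<inter> set (walk_verts (LE (f i)))" by blast
      then have v1: "v \<in> set (walk_verts (f j))" and v2: "v \<in> set (walk_verts (LE (f i)))" by auto
      have ik: "i < k" "Suc i < k" using j jk by auto
      have Pw: "is_walk src tgt (a i) (b i) (LE (f i))" by (rule LE_walk[OF walks[OF ik(1)]])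
      have Qw: "is_walk src tgt (a j) (b j) (f j)" by (rule walks[OF jk])
      obtain tp where tp: "tp \<le> length (snd (LE (f i)))" "walk_verts (LE (f i)) ! tp = v"
        using vert_index[OF v2] by blast
      obtain tq where tq: "tq \<le> length (snd (f j))" "walk_verts (f j) ! tq = v"
        using vert_index[OF v1] by blast
      define \<alpha> where "\<alpha> = wsplice (LE (f i)) (f j) tp tq"
      have aw: "is_walk src tgt (a i) (b j) \<alpha>"
        unfolding \<alpha>_def by (rule wsplice_walk[OF Pw Qw tp(1) tq(1)]) (use tp tq in simp)
      have qw: "is_walk src tgt (a (Suc i)) (b (Suc i)) (LE (f (Suc i)))"
        by (rule LE_walk[OF walks[OF ik(2)]])
      have "set (walk_verts \<alpha>) \<inter> set (walk_verts (LE (f (Suc i)))) \<noteq> {}"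
        by (rule crossingD[OF cr _ ik(2) _ jk aw qw]) (use j in simp_all)
      then obtain x where "x \<in> set (walk_verts \<alpha>) \<inter> set (walk_verts (LE (f (Suc i))))" by blast
      then have x1: "x \<in> set (walk_verts \<alpha>)" and x2: "x \<in> set (walk_verts (LE (f (Suc i))))" by auto
      have x3: "x \<in> set (walk_verts (f (Suc i)))" using subsetD[OF LE_verts x2] .
      have "set (walk_verts (f (Suc i))) \<inter> set (walk_verts (LE (f i))) = {}"
        using cons[of i] ik by simp
      then have x4: "x \<notin> set (walk_verts (LE (f i)))" using x3 by blast
      have "x \<in> set (walk_verts (LE (f i))) \<union> set (walk_verts (f j))"
        using subsetD[OF wsplice_verts_subset x1[unfolded \<alpha>_def]] .
      then have xj: "x \<in> set (walk_verts (f j))" using x4 by blast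
      have ne: "set (walk_verts (f j)) \<inter> set (walk_verts (LE (f (Suc i)))) \<noteq> {}"
        using xj x2 by blast
      have "Suc i < j" using j by simp
      then have "badpair k f (Suc i) j"
        unfolding badpair_def using jk ne by simp
      moreover have "j = Suc i + Suc d" using j by simp
      ultimately show False using Suc.IH by blast
    qed
  qed
  then show ?thesis unfolding bad_def
  proof (intro notI, elim exE)
    fix i j assume H: "\<And>d. \<forall>i j. j = i + Suc d \<longrightarrow> \<not> badpair k f i j" and b: "badpair k f i j"
    from b have "i < j" by (simp add: badpair_def)
    then obtain d where "j = Suc (i + d)" using less_imp_Suc_add by blast
    then have "j = i + Suc d" by simp
    then show False using H[of d] b by blast
  qed
qed

lemma coeff_MFPS[simp]: "coeff (MFPS c) = c" by simp

lemma coeff_zero[simp]: "coeff 0 m = 0" by (simp add: zero_mfps_def)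
lemma coeff_plus[simp]: "coeff (f + g) m = coeff f m + coeff g m" by (simp add: plus_mfps_def)
lemma coeff_uminus[simp]: "coeff (- f) m = - coeff f m" by (simp add: uminus_mfps_def)

lemma coeff_sum: "coeff (sum g A) m = (\<Sum>x\<in>A. coeff (g x) m)"
  by (induction A rule: infinite_finite_induct) auto

lemma coeff_signof: "coeff (of_int (sign p) * g) m = sign p * coeff g m"
proof (cases "evenperm p")
  case True then show ?thesis by (simp add: sign_def)
next
  case False
  have "of_int (sign p) * g = - g" using False by (simp add: sign_def)
  then show ?thesis using False by (simp add: sign_def)
qed

lemma coeff_mono_sum: "coeff (mono_sum S \<mu>) m = int (card {x \<in> S. \<mu> x = m})"
  by (simp add: mono_sum_def)

lemma mono_sum_times:
  assumes fS: "\<And>x. finite {p \<in> S. \<mu> p = x}" and fT: "\<And>x. finite {q \<in> T. \<nu> q = x}"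
  shows "mono_sum S \<mu> * mono_sum T \<nu> = mono_sum (S \<times> T) (\<lambda>(p, q). \<mu> p + \<nu> q)"
proof (rule mfps_eqI)
  fix m
  have eq: "{pq \<in> S \<times> T. (case pq of (p, q) \<Rightarrow> \<mu> p + \<nu> q) = m} =
      (\<Union>x\<in>{x. x \<subseteq># m}. {p \<in> S. \<mu> p = x} \<times> {q \<in> T. \<nu> q = m - x})"
  proof (intro Set.set_eqI iffI)
    fix pq assume "pq \<in> {pq \<in> S \<times> T. (case pq of (p, q) \<Rightarrow> \<mu> p + \<nu> q) = m}"
    then obtain p q where pq: "pq = (p, q)" "p \<in> S" "q \<in> T" "\<mu> p + \<nu> q = m" by auto
    then have "\<mu> p \<subseteq># m" "\<nu> q = m - \<mu> p" by auto
    then show "pq \<in> (\<Union>x\<in>{x. x \<subseteq># m}. {p \<in> S. \<mu> p = x} \<times> {q \<in> T. \<nu> q = m - x})"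
      using pq by auto
  next
    fix pq assume "pq \<in> (\<Union>x\<in>{x. x \<subseteq># m}. {p \<in> S. \<mu> p = x} \<times> {q \<in> T. \<nu> q = m - x})"
    then obtain x p q where pq: "pq = (p, q)" "p \<in> S" "q \<in> T" "x \<subseteq># m" "\<mu> p = x" "\<nu> q = m - x" by auto
    then have "\<mu> p + \<nu> q = m" by (simp add: subset_mset.add_diff_inverse)
    then show "pq \<in> {pq \<in> S \<times> T. (case pq of (p, q) \<Rightarrow> \<mu> p + \<nu> q) = m}" using pq by auto
  qed
  have "card {pq \<in> S \<times> T. (case pq of (p, q) \<Rightarrow> \<mu> p + \<nu> q) = m} =
      (\<Sum>x\<in>{x. x \<subseteq># m}. card ({p \<in> S. \<mu> p = x} \<times> {q \<in> T. \<nu> q = m - x}))"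
    unfolding eq by (rule card_UN_disjoint) (use fS fT finite_submsets in auto)
  also have "\<dots> = (\<Sum>x\<in>{x. x \<subseteq># m}. card {p \<in> S. \<mu> p = x} * card {q \<in> T. \<nu> q = m - x})"
    by (simp add: card_cartesian_product)
  finally show "coeff (mono_sum S \<mu> * mono_sum T \<nu>) m = coeff (mono_sum (S \<times> T) (\<lambda>(p, q). \<mu> p + \<nu> q)) m"
    by (simp add: coeff_mult coeff_mono_sum)
qed

lemma mono_sum_bij:
  assumes "bij_betw h S T" "\<And>x. x \<in> S \<Longrightarrow> \<nu> (h x) = \<mu> x"
  shows "mono_sum S \<mu> = mono_sum T \<nu>"
proof (rule mfps_eqI)
  fix m
  have "bij_betw h {x \<in> S. \<mu> x = m} {y \<in> T. \<nu> y = m}"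
    using assms unfolding bij_betw_def inj_on_def by auto
  then have "card {x \<in> S. \<mu> x = m} = card {y \<in> T. \<nu> y = m}" by (rule bij_betw_same_card)
  then show "coeff (mono_sum S \<mu>) m = coeff (mono_sum T \<nu>) m" by (simp add: coeff_mono_sum)
qed

lemma mset_sum_le: "finite A \<Longrightarrow> i \<in> A \<Longrightarrow> g i \<subseteq># sum g (A :: 'a set)"
  by (metis mset_subset_eq_add_left sum.remove)

lemma finite_PiE_fibers:
  fixes \<mu> :: "'a \<Rightarrow> 'b multiset" and n :: nat
  assumes f: "\<And>i x. i < n \<Longrightarrow> finite {p \<in> S i. \<mu> p = x}"
  shows "finite {g \<in> PiE {..<n} S. (\<Sum>i<n. \<mu> (g i)) = x}"
proof -
  have fin: "finite {p \<in> S i. \<mu> p \<subseteq># x}" if "i < n" for i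
  proof -
    have "{p \<in> S i. \<mu> p \<subseteq># x} = (\<Union>y\<in>{y. y \<subseteq># x}. {p \<in> S i. \<mu> p = y})" by auto
    then show ?thesis by (simp only:) (rule finite_UN_I[OF finite_submsets f[OF that]])
  qed
  have "{g \<in> PiE {..<n} S. (\<Sum>i<n. \<mu> (g i)) = x} \<subseteq> PiE {..<n} (\<lambda>i. {p \<in> S i. \<mu> p \<subseteq># x})"
  proof
    fix g assume g: "g \<in> {g \<in> PiE {..<n} S. (\<Sum>i<n. \<mu> (g i)) = x}"
    have "\<mu> (g i) \<subseteq># x" if "i < n" for i
      using g mset_sum_le[of "{..<n}" i "\<lambda>i. \<mu> (g i)"] that by auto
    then show "g \<in> PiE {..<n} (\<lambda>i. {p \<in> S i. \<mu> p \<subseteq># x})" using g by (auto simp: PiE_def Pi_def)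
  qed
  moreover have "finite (PiE {..<n} (\<lambda>i. {p \<in> S i. \<mu> p \<subseteq># x}))"
    by (rule finite_PiE) (use fin in auto)
  ultimately show ?thesis by (rule finite_subset)
qed

lemma mono_sum_prod:
  fixes n :: nat
  assumes f: "\<forall>i<n. \<forall>x. finite {p \<in> S i. \<mu> p = x}"
  shows "(\<Prod>i<n. mono_sum (S i) \<mu>) = mono_sum (PiE {..<n} S) (\<lambda>g. \<Sum>i<n. \<mu> (g i))"
  using f
proof (induction n)
  case 0
  show ?case
  proof (rule mfps_eqI)
    fix m
    have "{g \<in> PiE {} S. (\<Sum>i<0. \<mu> (g i)) = m} = (if m = {#} then {\<lambda>_. undefined} else {})" by auto
    then show "coeff (\<Prod>i<0. mono_sum (S i) \<mu>) m = coeff (mono_sum (PiE {..<0} S) (\<lambda>g. \<Sum>i<0. \<mu> (g i))) m"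
      by (simp add: coeff_mono_sum one_mfps_def)
  qed
next
  case (Suc n)
  have IH: "(\<Prod>i<n. mono_sum (S i) \<mu>) = mono_sum (PiE {..<n} S) (\<lambda>g. \<Sum>i<n. \<mu> (g i))"
    using Suc.IH Suc.prems by simp
  have "(\<Prod>i<Suc n. mono_sum (S i) \<mu>) = mono_sum (PiE {..<n} S) (\<lambda>g. \<Sum>i<n. \<mu> (g i)) * mono_sum (S n) \<mu>"
    using IH by simp
  also have "\<dots> = mono_sum (PiE {..<n} S \<times> S n) (\<lambda>(g, y). (\<Sum>i<n. \<mu> (g i)) + \<mu> y)"
    by (rule mono_sum_times) (use finite_PiE_fibers[of n S \<mu>] Suc.prems in simp_all)
  also have "\<dots> = mono_sum (PiE {..<Suc n} S) (\<lambda>g. \<Sum>i<Suc n. \<mu> (g i))"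
  proof (rule mono_sum_bij)
    have "bij_betw (\<lambda>(g, y). g(n := y)) (PiE {..<n} S \<times> S n) (PiE (insert n {..<n}) S)"
      by (rule bij_betwI[where g = "\<lambda>g. (g(n := undefined), g n)"])
         (auto simp: PiE_def Pi_def extensional_def fun_eq_iff)
    then show "bij_betw (\<lambda>(g, y). g(n := y)) (PiE {..<n} S \<times> S n) (PiE {..<Suc n} S)"
      by (simp add: lessThan_Suc)
    fix x assume x: "x \<in> PiE {..<n} S \<times> S n"
    obtain g y where gy: "x = (g, y)" by (cases x)
    have "(\<Sum>i<n. \<mu> ((g(n := y)) i)) = (\<Sum>i<n. \<mu> (g i))" by (rule sum.cong) auto
    then show "(\<Sum>i<Suc n. \<mu> ((case x of (g, y) \<Rightarrow> g(n := y)) i)) = (case x of (g, y) \<Rightarrow> (\<Sum>i<n. \<mu> (g i)) + \<mu> y)"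
      by (simp add: gy)
  qed
  finally show ?case .
qed

lemma steps_ok_tgt: "steps_ok src tgt v st \<Longrightarrow> z \<in> set st \<Longrightarrow> snd z = tgt (fst z)"
proof (induction st arbitrary: v)
  case Nil then show ?case by simp
next
  case (Cons x st)
  obtain e u where x: "x = (e, u)" by (cases x)
  show ?case using Cons x by auto
qed

lemma finite_walk_fibers: "finite {p. is_walk src tgt x y p \<and> wmon p = m}"
proof -
  define A where "A = set_mset m \<times> tgt ` set_mset m"
  have "{p. is_walk src tgt x y p \<and> wmon p = m} \<subseteq> (\<lambda>st. (x, st)) ` {st. set st \<subseteq> A \<and> length st = size m}"
  proof
    fix p assume p: "p \<in> {p. is_walk src tgt x y p \<and> wmon p = m}"
    obtain x' st where pe: "p = (x', st)" by (cases p)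
    have x': "x' = x" and ok: "steps_ok src tgt x st" and wm: "mset (map fst st) = m"
      using p pe by (auto simp: is_walk_def wmon_def)
    have "set st \<subseteq> A"
    proof
      fix z assume z: "z \<in> set st"
      have "fst z \<in> set_mset m" using z wm by force
      moreover have "snd z = tgt (fst z)" by (rule steps_ok_tgt[OF ok z])
      ultimately show "z \<in> A" unfolding A_def by (cases z) auto
    qed
    moreover have "length st = size m" using wm by (metis length_map size_mset)
    ultimately show "p \<in> (\<lambda>st. (x, st)) ` {st. set st \<subseteq> A \<and> length st = size m}"
      using pe x' by auto
  qed
  moreover have "finite {st. set st \<subseteq> A \<and> length st = size m}"
    by (rule finite_lists_length_eq) (simp add: A_def)
  ultimately show ?thesis by (meson finite_imageI finite_subset)
qed

definition Fam :: "('e \<Rightarrow> 'v) \<Rightarrow> ('e \<Rightarrow> 'v) \<Rightarrow> nat \<Rightarrow> (nat \<Rightarrow> 'v) \<Rightarrow> (nat \<Rightarrow> 'v) \<Rightarrow> (nat \<Rightarrow> nat) \<Rightarrow> (nat \<Rightarrow> ('v, 'e) walk) set" where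
  "Fam src tgt k a b \<sigma> = PiE {..<k} (\<lambda>i. {p. is_walk src tgt (a i) (b (\<sigma> i)) p})"

definition mu :: "nat \<Rightarrow> (nat \<Rightarrow> ('v, 'e) walk) \<Rightarrow> 'e multiset" where
  "mu k f = (\<Sum>i<k. wmon (f i))"

definition iota :: "nat \<Rightarrow> (nat \<Rightarrow> nat) \<times> (nat \<Rightarrow> ('v, 'e) walk) \<Rightarrow> (nat \<Rightarrow> nat) \<times> (nat \<Rightarrow> ('v, 'e) walk)" where
  "iota k x = (fst x \<circ> transpose (ib k (snd x)) (jb k (snd x)), swp k (snd x))"

definition consec :: "nat \<Rightarrow> (nat \<Rightarrow> ('v, 'e) walk) \<Rightarrow> bool" where
  "consec k f \<longleftrightarrow> (\<forall>i. i + 1 < k \<longrightarrow> set (walk_verts (f (i + 1))) \<inter> set (walk_verts (LE (f i))) = {})"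

lemma sum_two_out:
  assumes "finite A" "i \<in> A" "j \<in> A" "i \<noteq> j"
  shows "sum g A = g i + g j + sum g (A - {i, j})"
proof -
  have "sum g A = g i + sum g (A - {i})" using assms by (simp add: sum.remove)
  also have "sum g (A - {i}) = g j + sum g (A - {i} - {j})" using assms by (simp add: sum.remove)
  finally show ?thesis by (simp add: add.assoc Diff_insert2[symmetric])
qed

lemma Fam_walks: "f \<in> Fam src tgt k a b \<sigma> \<Longrightarrow> m < k \<Longrightarrow> is_walk src tgt (a m) (b (\<sigma> m)) (f m)"
  by (auto simp: Fam_def PiE_def Pi_def)

lemma iota_props:
  assumes sg: "\<sigma> permutes {..<k}" and fF: "f \<in> Fam src tgt k a b \<sigma>" and bd: "bad k f"
  shows "fst (iota k (\<sigma>, f)) permutes {..<k}"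
    "snd (iota k (\<sigma>, f)) \<in> Fam src tgt k a b (fst (iota k (\<sigma>, f)))"
    "bad k (snd (iota k (\<sigma>, f)))"
    "mu k (snd (iota k (\<sigma>, f))) = mu k f"
    "iota k (iota k (\<sigma>, f)) = (\<sigma>, f)"
    "sign (fst (iota k (\<sigma>, f))) = - sign \<sigma>"
proof -
  have walks: "\<And>m. m < k \<Longrightarrow> is_walk src tgt (a m) ((b \<circ> \<sigma>) m) (f m)"
    using Fam_walks[OF fF] by simp
  note sp = swp_props[of k f src tgt a "b \<circ> \<sigma>", OF bd walks]
  define i where "i = ib k f"
  define j where "j = jb k f"
  have ij: "i < j" "j < k" using sp(1,2) by (simp_all add: i_def j_def)
  define \<tau> where "\<tau> = transpose i j"
  have it: "iota k (\<sigma>, f) = (\<sigma> \<circ> \<tau>, swp k f)" by (simp add: iota_def \<tau>_def i_def j_def)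
  have tp: "\<tau> permutes {..<k}" unfolding \<tau>_def by (rule permutes_swap_id) (use ij in auto)
  show "fst (iota k (\<sigma>, f)) permutes {..<k}" unfolding it fst_conv by (rule permutes_compose[OF tp sg])
  show "snd (iota k (\<sigma>, f)) \<in> Fam src tgt k a b (fst (iota k (\<sigma>, f)))"
    unfolding it fst_conv snd_conv Fam_def
  proof (rule PiE_I)
    fix m assume m: "m \<in> {..<k}"
    show "swp k f m \<in> {p. is_walk src tgt (a m) (b ((\<sigma> \<circ> \<tau>) m)) p}"
    proof (cases "m = i")
      case True then show ?thesis using sp(3) ij by (simp add: \<tau>_def i_def j_def)
    next
      case False
      show ?thesis
      proof (cases "m = j")
        case True then show ?thesis using sp(4) ij by (simp add: \<tau>_def i_def j_def)
      next
        case False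
        then have "swp k f m = f m" "\<tau> m = m" using \<open>m \<noteq> i\<close> sp(5)[of m] by (auto simp: \<tau>_def i_def j_def)
        then show ?thesis using walks m by simp
      qed
    qed
  next
    fix m assume m: "m \<notin> {..<k}"
    then have "m \<noteq> i" "m \<noteq> j" using ij by auto
    then have "swp k f m = f m" using sp(5)[of m] by (simp add: i_def j_def)
    then show "swp k f m = undefined" using fF m by (auto simp: Fam_def PiE_def extensional_def)
  qed
  show "bad k (snd (iota k (\<sigma>, f)))" unfolding it using sp(6) by simp
  show "mu k (snd (iota k (\<sigma>, f))) = mu k f"
  proof -
    have iA: "i \<in> {..<k}" "j \<in> {..<k}" "i \<noteq> j" using ij by auto
    have rest: "(\<Sum>m\<in>{..<k} - {i, j}. wmon (swp k f m)) = (\<Sum>m\<in>{..<k} - {i, j}. wmon (f m))"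
      by (rule sum.cong) (use sp(5) in \<open>auto simp: i_def j_def\<close>)
    have "mu k (swp k f) = wmon (swp k f i) + wmon (swp k f j) + (\<Sum>m\<in>{..<k} - {i, j}. wmon (swp k f m))"
      unfolding mu_def by (rule sum_two_out) (use iA in auto)
    also have "\<dots> = wmon (f i) + wmon (f j) + (\<Sum>m\<in>{..<k} - {i, j}. wmon (f m))"
      using sp(10) rest by (simp add: i_def j_def)
    also have "\<dots> = mu k f"
      unfolding mu_def by (rule sum_two_out[symmetric]) (use iA in auto)
    finally show ?thesis unfolding it by simp
  qed
  show "iota k (iota k (\<sigma>, f)) = (\<sigma>, f)"
  proof -
    have "iota k (\<sigma> \<circ> \<tau>, swp k f) = (\<sigma> \<circ> \<tau> \<circ> transpose (ib k (swp k f)) (jb k (swp k f)), swp k (swp k f))"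
      by (simp add: iota_def)
    also have "\<dots> = (\<sigma> \<circ> \<tau> \<circ> \<tau>, f)" using sp(7,8,9) by (simp add: \<tau>_def i_def j_def)
    also have "\<sigma> \<circ> \<tau> \<circ> \<tau> = \<sigma>" by (simp add: \<tau>_def comp_assoc)
    finally have "iota k (\<sigma> \<circ> \<tau>, swp k f) = (\<sigma>, f)" .
    then show ?thesis unfolding it .
  qed
  show "sign (fst (iota k (\<sigma>, f))) = - sign \<sigma>"
  proof -
    have "permutation \<sigma>" by (rule permutes_imp_permutation[OF _ sg]) simp
    moreover have "permutation \<tau>" by (simp add: \<tau>_def permutation_swap_id)
    ultimately have sc: "sign (\<sigma> \<circ> \<tau>) = sign \<sigma> * sign \<tau>" by (rule sign_compose)
    have st: "sign \<tau> = -1" using ij by (simp add: \<tau>_def sign_swap_id)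
    have "sign (\<sigma> \<circ> \<tau>) = - sign \<sigma>" unfolding sc st by simp
    then show ?thesis unfolding it fst_conv .
  qed
qed

lemma sum_invol_zero:
  fixes h :: "'a \<Rightarrow> int"
  assumes "finite A" "\<And>x. x \<in> A \<Longrightarrow> g x \<in> A" "\<And>x. x \<in> A \<Longrightarrow> g (g x) = x"
    "\<And>x. x \<in> A \<Longrightarrow> h (g x) = - h x"
  shows "sum h A = 0"
proof -
  have "sum h A = sum (h \<circ> g) A"
    by (rule sum.reindex_bij_witness[where i = g and j = g]) (use assms in auto)
  also have "\<dots> = - sum h A" using assms(4) by (simp add: sum_negf)
  finally show ?thesis by simp
qed

lemma finite_Fam_fiber: "finite {f \<in> Fam src tgt k a b \<sigma>. mu k f = m}"
  unfolding Fam_def mu_def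
  by (rule finite_PiE_fibers) (use finite_walk_fibers in simp)

lemma core_count:
  assumes cr: "crossing src tgt k a b"
  shows "(\<Sum>\<sigma>\<in>{\<sigma>. \<sigma> permutes {..<k}}. sign \<sigma> * int (card {f \<in> Fam src tgt k a b \<sigma>. mu k f = m}))
       = int (card {f \<in> Fam src tgt k a b id. consec k f \<and> mu k f = m})"
proof -
  define P where "P = {\<sigma>. \<sigma> permutes {..<k}}"
  define X where "X = Sigma P (\<lambda>\<sigma>. {f \<in> Fam src tgt k a b \<sigma>. mu k f = m})"
  have finP: "finite P" unfolding P_def by (rule finite_permutations) simp
  have finX: "finite X" unfolding X_def using finP finite_Fam_fiber by (intro finite_SigmaI) auto
  have "(\<Sum>\<sigma>\<in>P. sign \<sigma> * int (card {f \<in> Fam src tgt k a b \<sigma>. mu k f = m}))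
      = (\<Sum>\<sigma>\<in>P. \<Sum>f\<in>{f \<in> Fam src tgt k a b \<sigma>. mu k f = m}. sign \<sigma>)"
    by (simp add: mult.commute)
  also have "\<dots> = (\<Sum>x\<in>X. sign (fst x))"
    unfolding X_def by (subst sum.Sigma) (use finP finite_Fam_fiber in \<open>auto simp: split_beta\<close>)
  also have "\<dots> = (\<Sum>x\<in>{x\<in>X. bad k (snd x)}. sign (fst x)) + (\<Sum>x\<in>{x\<in>X. \<not> bad k (snd x)}. sign (fst x))"
  proof -
    have U: "{x\<in>X. bad k (snd x)} \<union> {x\<in>X. \<not> bad k (snd x)} = X" by auto
    have "(\<Sum>x\<in>{x\<in>X. bad k (snd x)} \<union> {x\<in>X. \<not> bad k (snd x)}. sign (fst x)) =
        (\<Sum>x\<in>{x\<in>X. bad k (snd x)}. sign (fst x)) + (\<Sum>x\<in>{x\<in>X. \<not> bad k (snd x)}. sign (fst x))"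
      by (rule sum.union_disjoint) (use finX in auto)
    then show ?thesis unfolding U .
  qed
  also have "(\<Sum>x\<in>{x\<in>X. bad k (snd x)}. sign (fst x)) = 0"
  proof (rule sum_invol_zero[where g = "iota k"])
    show "finite {x \<in> X. bad k (snd x)}" using finX by simp
    fix x assume x: "x \<in> {x \<in> X. bad k (snd x)}"
    obtain \<sigma> f where xe: "x = (\<sigma>, f)" by (cases x)
    have sg: "\<sigma> permutes {..<k}" and fF: "f \<in> Fam src tgt k a b \<sigma>" and fm: "mu k f = m" and bd: "bad k f"
      using x xe by (auto simp: X_def P_def)
    note ip = iota_props[OF sg fF bd]
    show "iota k x \<in> {x \<in> X. bad k (snd x)}"
      using ip fm unfolding xe X_def P_def by (cases "iota k (\<sigma>, f)") auto
    show "iota k (iota k x) = x" using ip xe by simp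
    show "sign (fst (iota k x)) = - sign (fst x)" using ip xe by simp
  qed
  also have "(\<Sum>x\<in>{x\<in>X. \<not> bad k (snd x)}. sign (fst x)) = int (card {f \<in> Fam src tgt k a b id. consec k f \<and> mu k f = m})"
  proof -
    have eq: "{x\<in>X. \<not> bad k (snd x)} = (\<lambda>f. (id :: nat \<Rightarrow> nat, f)) ` {f \<in> Fam src tgt k a b id. consec k f \<and> mu k f = m}"
    proof (intro Set.set_eqI iffI)
      fix x assume x: "x \<in> {x\<in>X. \<not> bad k (snd x)}"
      obtain \<sigma> f where xe: "x = (\<sigma>, f)" by (cases x)
      have sg: "\<sigma> permutes {..<k}" and fF: "f \<in> Fam src tgt k a b \<sigma>" and fm: "mu k f = m" and nb: "\<not> bad k f"
        using x xe by (auto simp: X_def P_def)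
      have sid: "\<sigma> = id" by (rule good_id[OF cr sg Fam_walks[OF fF] nb])
      have "consec k f"
        unfolding consec_def
      proof (intro allI impI)
        fix i assume "i + 1 < k"
        then show "set (walk_verts (f (i + 1))) \<inter> set (walk_verts (LE (f i))) = {}"
          using nb unfolding bad_def badpair_def by auto
      qed
      then show "x \<in> (\<lambda>f. (id :: nat \<Rightarrow> nat, f)) ` {f \<in> Fam src tgt k a b id. consec k f \<and> mu k f = m}"
        using xe sid fF fm by auto
    next
      fix x assume x: "x \<in> (\<lambda>f. (id :: nat \<Rightarrow> nat, f)) ` {f \<in> Fam src tgt k a b id. consec k f \<and> mu k f = m}"
      then obtain f where xe: "x = (id, f)" and fF: "f \<in> Fam src tgt k a b id" and c: "consec k f"
        and fm: "mu k f = m" by auto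
      have nb: "\<not> bad k f"
        by (rule consec_all[OF cr]) (use Fam_walks[OF fF] c in \<open>auto simp: consec_def\<close>)
      have "id permutes {..<k}" by (rule permutes_id)
      then show "x \<in> {x\<in>X. \<not> bad k (snd x)}" using xe fF fm nb by (auto simp: X_def P_def)
    qed
    have "(\<Sum>x\<in>{x\<in>X. \<not> bad k (snd x)}. sign (fst x)) = (\<Sum>f\<in>{f \<in> Fam src tgt k a b id. consec k f \<and> mu k f = m}. sign (fst (id :: nat \<Rightarrow> nat, f)))"
      unfolding eq by (subst sum.reindex) (auto simp: inj_on_def)
    also have "\<dots> = int (card {f \<in> Fam src tgt k a b id. consec k f \<and> mu k f = m})"
      by (simp add: sign_id)
    finally show ?thesis .
  qed
  finally show ?thesis by (simp add: P_def)
qed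

lemma prod_walk_series:
  assumes "p permutes {..<k}"
  shows "(\<Prod>i<k. walk_series src tgt (a i) (b (p i))) = mono_sum (Fam src tgt k a b p) (mu k)"
proof -
  have "(\<Prod>i<k. walk_series src tgt (a i) (b (p i))) = (\<Prod>i<k. mono_sum {q. is_walk src tgt (a i) (b (p i)) q} wmon)"
    by (simp add: walk_series_def)
  also have "\<dots> = mono_sum (Fam src tgt k a b p) (mu k)"
    unfolding Fam_def mu_def
    by (rule mono_sum_prod) (intro allI impI, simp add: finite_walk_fibers)
  finally show ?thesis .
qed

lemma formal_part:
  fixes src tgt :: "'e \<Rightarrow> 'v" and a b :: "nat \<Rightarrow> 'v"
  assumes cr: "crossing src tgt k a b"
  shows "det (mat k k (\<lambda>(i, j). walk_series src tgt (a i) (b j))) =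
           mono_sum {ps. length ps = k \<and> (\<forall>i<k. is_walk src tgt (a i) (b i) (ps ! i)) \<and>
                          (\<forall>i. i + 1 < k \<longrightarrow>
                               set (walk_verts (ps ! (i + 1))) \<inter> set (walk_verts (LE (ps ! i))) = {})}
                    (\<lambda>ps. sum_list (map wmon ps))"
    (is "?L = mono_sum ?G ?w")
proof (rule mfps_eqI)
  fix m
  have L: "?L = (\<Sum>p\<in>{p. p permutes {..<k}}. of_int (sign p) * mono_sum (Fam src tgt k a b p) (mu k))"
  proof -
    have "?L = (\<Sum>p\<in>{p. p permutes {0..<k}}. of_int (sign p) *
        (\<Prod>i = 0..<k. mat k k (\<lambda>(i, j). walk_series src tgt (a i) (b j)) $$ (i, p i)))"
      unfolding det_def by simp
    also have "\<dots> = (\<Sum>p\<in>{p. p permutes {..<k}}. of_int (sign p) * mono_sum (Fam src tgt k a b p) (mu k))"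
      unfolding atLeast0LessThan[symmetric] by (rule sum.cong) (auto simp: prod_walk_series atLeast0LessThan)
    finally show ?thesis .
  qed
  have "coeff ?L m = (\<Sum>p\<in>{p. p permutes {..<k}}. sign p * int (card {f \<in> Fam src tgt k a b p. mu k f = m}))"
    unfolding L coeff_sum coeff_signof coeff_mono_sum by simp
  also have "\<dots> = int (card {f \<in> Fam src tgt k a b id. consec k f \<and> mu k f = m})"
    by (rule core_count[OF cr])
  also have "card {f \<in> Fam src tgt k a b id. consec k f \<and> mu k f = m} = card {ps \<in> ?G. ?w ps = m}"
  proof (rule bij_betw_same_card[symmetric])
    define h where "h ps = (\<lambda>i. if i < k then ps ! i else undefined)" for ps :: "('v, 'e) walk list"
    define h' where "h' f = map f [0..<k]" for f :: "nat \<Rightarrow> ('v, 'e) walk"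
    have sl: "sum_list (map wmon ps) = mu k (h ps)" if "length ps = k" for ps
      using that unfolding mu_def h_def by (simp add: sum_list_sum_nth atLeast0LessThan)
    show "bij_betw h {ps \<in> ?G. ?w ps = m} {f \<in> Fam src tgt k a b id. consec k f \<and> mu k f = m}"
    proof (rule bij_betw_byWitness[where f' = h'])
      show "\<forall>ps\<in>{ps \<in> ?G. ?w ps = m}. h' (h ps) = ps"
        by (auto simp: h_def h'_def intro!: nth_equalityI)
      show "\<forall>f\<in>{f \<in> Fam src tgt k a b id. consec k f \<and> mu k f = m}. h (h' f) = f"
        by (auto simp: h_def h'_def Fam_def PiE_def extensional_def fun_eq_iff)
      show "h ` {ps \<in> ?G. ?w ps = m} \<subseteq> {f \<in> Fam src tgt k a b id. consec k f \<and> mu k f = m}"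
      proof
        fix f assume "f \<in> h ` {ps \<in> ?G. ?w ps = m}"
        then obtain ps where ps: "ps \<in> ?G" "?w ps = m" and f: "f = h ps" by auto
        have "f \<in> Fam src tgt k a b id" unfolding Fam_def f h_def by (rule PiE_I) (use ps in auto)
        moreover have "consec k f" using ps f unfolding consec_def h_def by auto
        moreover have "mu k f = m" using ps f sl by auto
        ultimately show "f \<in> {f \<in> Fam src tgt k a b id. consec k f \<and> mu k f = m}" by simp
      qed
      show "h' ` {f \<in> Fam src tgt k a b id. consec k f \<and> mu k f = m} \<subseteq> {ps \<in> ?G. ?w ps = m}"
      proof
        fix ps assume "ps \<in> h' ` {f \<in> Fam src tgt k a b id. consec k f \<and> mu k f = m}"
        then obtain f where f: "f \<in> Fam src tgt k a b id" "consec k f" "mu k f = m" and ps: "ps = h' f" by auto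
        have len: "length ps = k" using ps by (simp add: h'_def)
        have nth: "ps ! i = f i" if "i < k" for i using ps that by (simp add: h'_def)
        have "ps \<in> ?G" using len nth f Fam_walks[OF f(1)] unfolding consec_def by auto
        moreover have "h ps = f" using len nth f(1) by (auto simp: h_def Fam_def PiE_def extensional_def)
        then have "?w ps = m" using sl[OF len] f(3) by simp
        ultimately show "ps \<in> {ps \<in> ?G. ?w ps = m}" by simp
      qed
    qed
  qed
  finally show "coeff ?L m = coeff (mono_sum ?G ?w) m" by (simp add: coeff_mono_sum)
qed

lemma rweight_mset: "walk_rweight r p = prod_mset (image_mset r (wmon p))"
  unfolding walk_rweight_def wmon_def by (simp only: mset_map[symmetric] prod_mset_prod_list map_map)

lemma rweight_nonneg: "(\<And>e. r e \<ge> 0) \<Longrightarrow> walk_rweight r p \<ge> (0::real)"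
  unfolding walk_rweight_def by (rule prod_list_nonneg) auto

lemma prod_rweight_mu: "(\<Prod>i<n. walk_rweight r (f i)) = prod_mset (image_mset r (mu n f))"
proof (induction n)
  case 0 then show ?case by (simp add: mu_def)
next
  case (Suc n) then show ?case by (simp add: mu_def rweight_mset prod_mset.union mult.commute)
qed

lemma summable_PiE_nonneg:
  fixes f :: "'a \<Rightarrow> 'b \<Rightarrow> real"
  assumes "finite A" "\<And>x y. 0 \<le> f x y" "\<And>x. x \<in> A \<Longrightarrow> f x summable_on B x"
  shows "(\<lambda>g. \<Prod>x\<in>A. f x (g x)) summable_on PiE A B"
  using assms(1,3)
proof (induction A rule: finite_induct)
  case empty
  show ?case by simp
next
  case (insert x F)
  define P where "P g = (\<Prod>x'\<in>F. f x' (g x'))" for g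
  have Pnn: "P g \<ge> 0" for g unfolding P_def by (rule prod_nonneg) (use assms(2) in auto)
  have pi: "PiE (insert x F) B = (\<lambda>(g,y). g(x:=y)) ` (PiE F B \<times> B x)"
    unfolding PiE_insert_eq
    by (subst swap_product [symmetric]) (simp add: image_image case_prod_unfold)
  have inj: "inj_on (\<lambda>(g, y). g(x := y)) (PiE F B \<times> B x)"
    using \<open>x \<notin> F\<close> by (rule inj_combinator')
  have comp: "((\<lambda>g. \<Prod>x\<in>insert x F. f x (g x)) \<circ> (\<lambda>(g,y). g(x:=y))) = (\<lambda>(g,y). f x y * P g)"
  proof (rule ext)
    fix gy :: "('a \<Rightarrow> 'b) \<times> 'b"
    obtain g y where gy: "gy = (g, y)" by (cases gy)
    have "(\<Prod>x'\<in>F. f x' ((g(x := y)) x')) = P g"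
      unfolding P_def by (rule prod.cong) (use insert.hyps in auto)
    then show "((\<lambda>g. \<Prod>x\<in>insert x F. f x (g x)) \<circ> (\<lambda>(g,y). g(x:=y))) gy = (\<lambda>(g,y). f x y * P g) gy"
      using insert.hyps by (simp add: gy)
  qed
  have IH: "P summable_on PiE F B" unfolding P_def using insert.IH insert.prems by simp
  have fx: "f x summable_on B x" using insert.prems by simp
  have "(\<lambda>(g,y). f x y * P g) abs_summable_on Sigma (PiE F B) (\<lambda>_. B x)"
  proof (subst abs_summable_on_Sigma_iff, intro conjI ballI)
    fix g assume "g \<in> PiE F B"
    have "(\<lambda>y. f x y * P g) summable_on B x" by (rule summable_on_cmult_left[OF fx])
    then show "(\<lambda>y. (\<lambda>(g,y). f x y * P g) (g, y)) abs_summable_on B x"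
      by (simp add: abs_mult abs_of_nonneg[OF assms(2)] abs_of_nonneg[OF Pnn])
  next
    have eq: "infsum (\<lambda>y. norm ((\<lambda>(g,y). f x y * P g) (g, y))) (B x) = infsum (f x) (B x) * P g" for g
    proof -
      have "infsum (\<lambda>y. norm ((\<lambda>(g,y). f x y * P g) (g, y))) (B x) = infsum (\<lambda>y. f x y * P g) (B x)"
        by (rule infsum_cong) (use assms(2) Pnn in simp)
      also have "\<dots> = infsum (f x) (B x) * P g" by (rule infsum_cmult_left) (rule fx)
      finally show ?thesis .
    qed
    have "(\<lambda>g. infsum (f x) (B x) * P g) summable_on PiE F B" by (rule summable_on_cmult_right[OF IH])
    moreover have inn: "infsum (f x) (B x) \<ge> 0" by (rule infsum_nonneg) (rule assms(2))
    ultimately show "(\<lambda>g. infsum (\<lambda>y. norm ((\<lambda>(g,y). f x y * P g) (g, y))) (B x)) abs_summable_on PiE F B"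
      unfolding eq by (simp add: abs_mult abs_of_nonneg[OF inn] abs_of_nonneg[OF Pnn])
  qed
  then have "(\<lambda>(g,y). f x y * P g) summable_on (PiE F B \<times> B x)"
    by (rule abs_summable_summable)
  then have "((\<lambda>g. \<Prod>x\<in>insert x F. f x (g x)) \<circ> (\<lambda>(g,y). g(x:=y))) summable_on (PiE F B \<times> B x)"
    unfolding comp .
  then show ?case unfolding pi summable_on_reindex[OF inj] .
qed

lemma real_part:
  fixes src tgt :: "'e \<Rightarrow> 'v" and a b :: "nat \<Rightarrow> 'v" and r :: "'e \<Rightarrow> real"
  assumes cr: "crossing src tgt n a b" and rnn: "\<And>e. r e \<ge> 0"
    and sm: "\<And>i j. i < n \<Longrightarrow> j < n \<Longrightarrow> walk_rweight r summable_on {p. is_walk src tgt (a i) (b j) p}"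
  shows "det (mat n n (\<lambda>(i, j). infsum (walk_rweight r) {p. is_walk src tgt (a i) (b j) p})) \<ge> 0"
proof -
  define rw :: "('v, 'e) walk \<Rightarrow> real" where "rw = walk_rweight r"
  have rwnn: "rw p \<ge> 0" for p unfolding rw_def by (rule rweight_nonneg[OF rnn])
  define Gf where "Gf f = (\<Prod>i<n. rw (f i))" for f :: "nat \<Rightarrow> ('v, 'e) walk"
  have Gnn: "Gf f \<ge> 0" for f unfolding Gf_def by (rule prod_nonneg) (use rwnn in auto)
  have Gmu: "Gf f = prod_mset (image_mset r (mu n f))" for f
    unfolding Gf_def rw_def by (rule prod_rweight_mu)
  define P where "P = {\<sigma>. \<sigma> permutes {..<n}}"
  have finP: "finite P" unfolding P_def by (rule finite_permutations) simp
  have img: "\<sigma> i < n" if "\<sigma> \<in> P" "i < n" for \<sigma> i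
    using permutes_in_image[of \<sigma> "{..<n}" i] that by (simp add: P_def)
  have Gsum: "Gf summable_on Fam src tgt n a b \<sigma>" if "\<sigma> \<in> P" for \<sigma>
    unfolding Gf_def Fam_def
    by (rule summable_PiE_nonneg) (use rwnn sm img[OF that] in \<open>auto simp: rw_def\<close>)
  have prodinf: "(\<Prod>i<n. infsum rw {p. is_walk src tgt (a i) (b (\<sigma> i)) p}) = infsum Gf (Fam src tgt n a b \<sigma>)"
    if "\<sigma> \<in> P" for \<sigma>
  proof -
    have "infsum (\<lambda>g. \<Prod>i\<in>{..<n}. rw (g i)) (PiE {..<n} (\<lambda>i. {p. is_walk src tgt (a i) (b (\<sigma> i)) p}))
        = (\<Prod>i\<in>{..<n}. infsum rw {p. is_walk src tgt (a i) (b (\<sigma> i)) p})"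
    proof (rule infsum_prod_PiE_abs)
      fix i assume i: "i \<in> {..<n}"
      have "rw summable_on {p. is_walk src tgt (a i) (b (\<sigma> i)) p}"
        unfolding rw_def by (rule sm) (use i img[OF that] in auto)
      then show "rw abs_summable_on {p. is_walk src tgt (a i) (b (\<sigma> i)) p}"
        by (simp add: abs_of_nonneg[OF rwnn])
    qed simp
    moreover have "Gf = (\<lambda>g. \<Prod>i\<in>{..<n}. rw (g i))" by (rule ext) (simp add: Gf_def)
    ultimately show ?thesis by (simp add: Fam_def)
  qed
  have det_eq: "det (mat n n (\<lambda>(i, j). infsum (walk_rweight r) {p. is_walk src tgt (a i) (b j) p}))
      = (\<Sum>\<sigma>\<in>P. of_int (sign \<sigma>) * infsum Gf (Fam src tgt n a b \<sigma>))"
  proof -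
    have "det (mat n n (\<lambda>(i, j). infsum (walk_rweight r) {p. is_walk src tgt (a i) (b j) p}))
      = (\<Sum>\<sigma>\<in>{p. p permutes {0..<n}}. of_int (sign \<sigma>) *
          (\<Prod>i = 0..<n. mat n n (\<lambda>(i, j). infsum (walk_rweight r) {p. is_walk src tgt (a i) (b j) p}) $$ (i, \<sigma> i)))"
      unfolding det_def by simp
    also have "\<dots> = (\<Sum>\<sigma>\<in>P. of_int (sign \<sigma>) * infsum Gf (Fam src tgt n a b \<sigma>))"
      unfolding atLeast0LessThan P_def
    proof (rule sum.cong)
      fix \<sigma> assume s: "\<sigma> \<in> {p. p permutes {..<n}}"
      then have sP: "\<sigma> \<in> P" by (simp add: P_def)
      have "(\<Prod>i<n. mat n n (\<lambda>(i, j). infsum (walk_rweight r) {p. is_walk src tgt (a i) (b j) p}) $$ (i, \<sigma> i))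
          = (\<Prod>i<n. infsum rw {p. is_walk src tgt (a i) (b (\<sigma> i)) p})"
        by (rule prod.cong) (use img[OF sP] in \<open>auto simp: rw_def\<close>)
      then show "of_int (sign \<sigma>) * (\<Prod>i<n. mat n n (\<lambda>(i, j). infsum (walk_rweight r) {p. is_walk src tgt (a i) (b j) p}) $$ (i, \<sigma> i))
          = of_int (sign \<sigma>) * infsum Gf (Fam src tgt n a b \<sigma>)"
        using prodinf[OF sP] by simp
    qed simp
    finally show ?thesis .
  qed
  define B where "B \<sigma> = {f \<in> Fam src tgt n a b \<sigma>. bad n f}" for \<sigma>
  define Gd where "Gd \<sigma> = {f \<in> Fam src tgt n a b \<sigma>. \<not> bad n f}" for \<sigma>
  have split: "infsum Gf (Fam src tgt n a b \<sigma>) = infsum Gf (B \<sigma>) + infsum Gf (Gd \<sigma>)" if "\<sigma> \<in> P" for \<sigma>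
  proof -
    have U: "B \<sigma> \<union> Gd \<sigma> = Fam src tgt n a b \<sigma>" by (auto simp: B_def Gd_def)
    have "infsum Gf (B \<sigma> \<union> Gd \<sigma>) = infsum Gf (B \<sigma>) + infsum Gf (Gd \<sigma>)"
      by (rule infsum_Un_disjoint)
         (use summable_on_subset_banach[OF Gsum[OF that]] in \<open>auto simp: B_def Gd_def\<close>)
    then show ?thesis unfolding U .
  qed
  have Gd_empty: "Gd \<sigma> = {}" if "\<sigma> \<in> P" "\<sigma> \<noteq> id" for \<sigma>
  proof -
    have "f \<notin> Gd \<sigma>" for f
    proof
      assume "f \<in> Gd \<sigma>"
      then have fF: "f \<in> Fam src tgt n a b \<sigma>" and nb: "\<not> bad n f" by (auto simp: Gd_def)
      have "\<sigma> = id" by (rule good_id[OF cr _ Fam_walks[OF fF] nb]) (use that in \<open>simp add: P_def\<close>)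
      then show False using that by simp
    qed
    then show ?thesis by blast
  qed
  define H where "H x = of_int (sign (fst x)) * Gf (snd x)" for x :: "(nat \<Rightarrow> nat) \<times> (nat \<Rightarrow> ('v, 'e) walk)"
  define XB where "XB = Sigma P B"
  have Bsum: "Gf summable_on B \<sigma>" if "\<sigma> \<in> P" for \<sigma>
    by (rule summable_on_subset_banach[OF Gsum[OF that]]) (auto simp: B_def)
  have absH: "norm (H x) = Gf (snd x)" for x
    unfolding H_def using Gnn[of "snd x"] by (simp add: abs_mult sign_def abs_of_nonneg)
  have Hsum: "H summable_on XB"
  proof -
    have "H abs_summable_on Sigma P B"
    proof (subst abs_summable_on_Sigma_iff, intro conjI ballI)
      fix \<sigma> assume s: "\<sigma> \<in> P"
      show "(\<lambda>y. H (\<sigma>, y)) abs_summable_on B \<sigma>"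
        unfolding absH snd_conv by (rule Bsum[OF s])
    next
      show "(\<lambda>x. infsum (\<lambda>y. norm (H (x, y))) (B x)) abs_summable_on P" using finP by simp
    qed
    then show ?thesis unfolding XB_def by (rule abs_summable_summable)
  qed
  have Hsig: "infsum H XB = (\<Sum>\<sigma>\<in>P. of_int (sign \<sigma>) * infsum Gf (B \<sigma>))"
  proof -
    have "infsum H XB = infsum (\<lambda>\<sigma>. infsum (\<lambda>f. H (\<sigma>, f)) (B \<sigma>)) P"
      unfolding XB_def by (rule infsum_Sigma_banach[symmetric]) (use Hsum in \<open>simp add: XB_def\<close>)
    also have "\<dots> = (\<Sum>\<sigma>\<in>P. infsum (\<lambda>f. H (\<sigma>, f)) (B \<sigma>))" using finP by simp
    also have "\<dots> = (\<Sum>\<sigma>\<in>P. of_int (sign \<sigma>) * infsum Gf (B \<sigma>))"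
    proof (rule sum.cong)
      fix \<sigma> assume "\<sigma> \<in> P"
      show "infsum (\<lambda>f. H (\<sigma>, f)) (B \<sigma>) = of_int (sign \<sigma>) * infsum Gf (B \<sigma>)"
        unfolding H_def fst_conv snd_conv by (rule infsum_cmult_right) (rule Bsum[OF \<open>\<sigma> \<in> P\<close>])
    qed simp
    finally show ?thesis .
  qed
  have H0: "infsum H XB = 0"
  proof -
    have io: "iota n x \<in> XB" "iota n (iota n x) = x" "H (iota n x) = - H x" if "x \<in> XB" for x
    proof -
      obtain \<sigma> f where xe: "x = (\<sigma>, f)" by (cases x)
      have sg: "\<sigma> permutes {..<n}" and fF: "f \<in> Fam src tgt n a b \<sigma>" and bd: "bad n f"
        using that xe by (auto simp: XB_def P_def B_def)
      note ip = iota_props[OF sg fF bd]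
      show "iota n x \<in> XB"
        using ip unfolding xe XB_def P_def B_def by (cases "iota n (\<sigma>, f)") auto
      show "iota n (iota n x) = x" using ip xe by simp
      have "Gf (snd (iota n x)) = Gf f" using ip(4) xe by (simp add: Gmu)
      then show "H (iota n x) = - H x" using ip(6) xe by (simp add: H_def)
    qed
    have bij: "bij_betw (iota n) XB XB"
      by (rule bij_betw_byWitness[where f' = "iota n"]) (use io in auto)
    have "infsum H XB = infsum (\<lambda>x. H (iota n x)) XB"
      by (rule infsum_reindex_bij_betw[symmetric]) (rule bij)
    also have "\<dots> = infsum (\<lambda>x. - H x) XB" by (rule infsum_cong) (use io in simp)
    also have "\<dots> = - infsum H XB" by (rule infsum_uminus)
    finally show ?thesis by simp
  qed
  have "det (mat n n (\<lambda>(i, j). infsum (walk_rweight r) {p. is_walk src tgt (a i) (b j) p}))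
      = (\<Sum>\<sigma>\<in>P. of_int (sign \<sigma>) * infsum Gf (B \<sigma>)) + (\<Sum>\<sigma>\<in>P. of_int (sign \<sigma>) * infsum Gf (Gd \<sigma>))"
    unfolding det_eq by (simp add: split distrib_left sum.distrib cong: sum.cong)
  also have "(\<Sum>\<sigma>\<in>P. of_int (sign \<sigma>) * infsum Gf (B \<sigma>)) = 0" using Hsig H0 by simp
  also have "(\<Sum>\<sigma>\<in>P. of_int (sign \<sigma>) * infsum Gf (Gd \<sigma>)) = (\<Sum>\<sigma>\<in>P. if \<sigma> = id then infsum Gf (Gd id) else 0)"
    by (rule sum.cong) (auto simp: Gd_empty sign_id)
  also have "\<dots> = infsum Gf (Gd id)"
    using finP by (simp add: P_def permutes_id)
  finally show ?thesis using infsum_nonneg[of "Gd id" Gf] Gnn by simp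
qed

theorem theorem6p4:
  fixes src tgt :: "'e \<Rightarrow> 'v" and k :: nat and a b :: "nat \<Rightarrow> 'v"
  assumes countable_walks:
    "\<forall>x y n. countable {p. is_walk src tgt x y p \<and> length (snd p) = n}"
  assumes crossing:
    "\<forall>i i' j j'. i < i' \<and> i' < k \<and> j' < j \<and> j < k \<longrightarrow>
       (\<forall>p q. is_walk src tgt (a i) (b j) p \<and> is_walk src tgt (a i') (b j') q \<longrightarrow>
          set (walk_verts p) \<inter> set (walk_verts q) \<noteq> {})"
  shows "(det (mat k k (\<lambda>(i, j). walk_series src tgt (a i) (b j))) =
           mono_sum {ps. length ps = k \<and> (\<forall>i<k. is_walk src tgt (a i) (b i) (ps ! i)) \<and>
                          (\<forall>i. i + 1 < k \<longrightarrow>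
                               set (walk_verts (ps ! (i + 1))) \<inter> set (walk_verts (LE (ps ! i))) = {})}
                    (\<lambda>ps. sum_list (map wmon ps))) \<and>
         (\<forall>r :: 'e \<Rightarrow> real. (\<forall>e. r e \<ge> 0) \<and>
           (\<forall>i<k. \<forall>j<k. walk_rweight r summable_on {p. is_walk src tgt (a i) (b j) p}) \<longrightarrow>
           totally_nonneg (mat k k (\<lambda>(i, j). infsum (walk_rweight r) {p. is_walk src tgt (a i) (b j) p})))"
proof -
  have cr: "crossing src tgt k a b" unfolding crossing_def by (rule crossing)
  show ?thesis
  proof (intro conjI allI impI)
    show "det (mat k k (\<lambda>(i, j). walk_series src tgt (a i) (b j))) =
           mono_sum {ps. length ps = k \<and> (\<forall>i<k. is_walk src tgt (a i) (b i) (ps ! i)) \<and>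
                          (\<forall>i. i + 1 < k \<longrightarrow>
                               set (walk_verts (ps ! (i + 1))) \<inter> set (walk_verts (LE (ps ! i))) = {})}
                    (\<lambda>ps. sum_list (map wmon ps))"
      by (rule formal_part[OF cr])
  next
    fix r :: "'e \<Rightarrow> real"
    assume asm: "(\<forall>e. r e \<ge> 0) \<and> (\<forall>i<k. \<forall>j<k. walk_rweight r summable_on {p. is_walk src tgt (a i) (b j) p})"
    define M where "M = mat k k (\<lambda>(i, j). infsum (walk_rweight r) {p. is_walk src tgt (a i) (b j) p})"
    show "totally_nonneg (mat k k (\<lambda>(i, j). infsum (walk_rweight r) {p. is_walk src tgt (a i) (b j) p}))"
      unfolding totally_nonneg_def M_def[symmetric]
    proof (intro allI impI)
      fix I J assume IJ: "I \<subseteq> {..<dim_row M}" "J \<subseteq> {..<dim_col M}" "card I = card J"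
      have Ik: "I \<subseteq> {..<k}" and Jk: "J \<subseteq> {..<k}" using IJ by (auto simp: M_def)
      define n where "n = card I"
      have cI: "card {i. i < dim_row M \<and> i \<in> I} = n"
        using Ik unfolding n_def by (auto simp: M_def intro!: arg_cong[where f = card])
      have cJ: "card {i. i < dim_col M \<and> i \<in> J} = n"
        using Jk IJ(3) unfolding n_def by (auto simp: M_def intro!: arg_cong[where f = card])
      have pI: "pick I i < k" if "i < n" for i
        using pick_in_set_le[of i I] that Ik unfolding n_def by auto
      have pJ: "pick J i < k" if "i < n" for i
        using pick_in_set_le[of i J] that Jk IJ(3) unfolding n_def by auto
      define a' where "a' i = a (pick I i)" for i
      define b' where "b' j = b (pick J j)" for j
      have sub: "submatrix M I J = mat n n (\<lambda>(i, j). infsum (walk_rweight r) {p. is_walk src tgt (a' i) (b' j) p})"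
        unfolding submatrix_def cI cJ
      proof (rule eq_matI)
        fix i j assume "i < dim_row (mat n n (\<lambda>(i, j). infsum (walk_rweight r) {p. is_walk src tgt (a' i) (b' j) p}))"
          "j < dim_col (mat n n (\<lambda>(i, j). infsum (walk_rweight r) {p. is_walk src tgt (a' i) (b' j) p}))"
        then have ij: "i < n" "j < n" by auto
        show "mat n n (\<lambda>(i, j). M $$ (pick I i, pick J j)) $$ (i, j) =
            mat n n (\<lambda>(i, j). infsum (walk_rweight r) {p. is_walk src tgt (a' i) (b' j) p}) $$ (i, j)"
          using ij pI[OF ij(1)] pJ[OF ij(2)] by (simp add: M_def a'_def b'_def)
      qed auto
      have cr': "crossing src tgt n a' b'"
        unfolding crossing_def
      proof (intro allI impI)
        fix i i' j j' p q
        assume h: "i < i' \<and> i' < n \<and> j' < j \<and> j < n"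
          and w: "is_walk src tgt (a' i) (b' j) p \<and> is_walk src tgt (a' i') (b' j') q"
        have m1: "pick I i < pick I i'" using h pick_mono_le[of i' I i] unfolding n_def by auto
        have m2: "pick J j' < pick J j" using h pick_mono_le[of j J j'] IJ(3) unfolding n_def by auto
        show "set (walk_verts p) \<inter> set (walk_verts q) \<noteq> {}"
          by (rule crossingD[OF cr m1 pI m2 pJ]) (use h w in \<open>simp_all add: a'_def b'_def\<close>)
      qed
      have "det (mat n n (\<lambda>(i, j). infsum (walk_rweight r) {p. is_walk src tgt (a' i) (b' j) p})) \<ge> 0"
      proof (rule real_part[OF cr'])
        show "\<And>e. 0 \<le> r e" using asm by simp
        fix i j assume "i < n" "j < n"
        then show "walk_rweight r summable_on {p. is_walk src tgt (a' i) (b' j) p}"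
          using asm pI pJ by (simp add: a'_def b'_def)
      qed
      then show "0 \<le> det (submatrix M I J)" unfolding sub .
    qed
  qed
qed

end
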